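(* Let $\widehat{\mathcal W}_k\subseteq\mathcal W'_k$ be the $\mathbb C(\lambda)$-subspace generated by the classes of those $x^u$, $u\in M_k$, for which $u$ is an interior point of $C(A)$. Then $\dim_{\mathbb C(\lambda)}\widehat{\mathcal W}_k=R_k$.
   Context: Let $A=\{\mathbf a_1,\dots,\mathbf a_m\}\subseteq\mathbb Z^n$ be linearly independent over $\mathbb R$, $\mathbf a_0\in\mathbb Z^n$, and $\ell_0,\dots,\ell_m$ positive integers with gcd $1$, $\ell_0\mathbf a_0=\sum_{j=1}^m\ell_j\mathbf a_j$, $\ell_0=\sum_{j=1}^m\ell_j$. Let $f_\lambda=\sum_{j=1}^m\ell_jx^{\mathbf a_j}-\ell_0\lambda x^{\mathbf a_0}$. Let $V$ be the real span of $A$, $V_{\mathbb Z}=V\cap\mathbb Z^n$, $C(A)$ the closed real cone generated by $A$ (interior relative to $V$), $M=V_{\mathbb Z}\cap C(A)$, $\mathbb ZA_+$ the group generated by $A\cup\{\mathbf a_0\}$. Fix a coset $\mathcal C_k$ of $\mathbb ZA_+$ in $V_{\mathbb Z}$, $M_k=M\cap\mathcal C_k$, $S'_k$ the $\mathbb C(\lambda)$-span of $\{x^u:u\in M_k\}$, $D_i=x_i\partial/\partial x_i+x_i\partial f_\lambda/\partial x_i$ ($i=1,\dots,n$), and $\mathcal W'_k=S'_k/\sum_iD_iS'_k$. Let $P(A)=\{\sum_jc_j\mathbf a_j:0\le c_j<1\}$, $\mathcal B=V_{\mathbb Z}\cap P(A)$, $\mathcal B_k=\mathcal B\cap\mathcal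 C_k$, and $R_k$ the number of elements $\sum_jv_j\mathbf a_j$ of $\mathcal B_k$ with all $v_j>0$. *)

theory Defs
  imports "HOL-Analysis.Analysis" "HOL-Computational_Algebra.Polynomial"
    "HOL-Computational_Algebra.Fraction_Field"
begin

type_synonym K = "complex poly fract"

definition lam :: K where "lam = Fract [:0, 1:] 1"

definition rv :: "int ^ 'n \<Rightarrow> real ^ 'n" where
  "rv v = (\<chi> i. real_of_int (v $ i))"

definition VZ :: "(nat \<Rightarrow> int ^ 'n) \<Rightarrow> nat \<Rightarrow> (int ^ 'n) set" where
  "VZ a m = {v. rv v \<in> span (rv ` a ` {1..m})}"

definition coneA :: "(nat \<Rightarrow> int ^ 'n) \<Rightarrow> nat \<Rightarrow> (real ^ 'n) set" where
  "coneA a m = {x. \<exists>c. (\<forall>j\<in>{1..m}. 0 \<le> c j) \<and> x = (\<Sum>j=1..m. c j *\<^sub>R rv (a j))}"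

definition Mset :: "(nat \<Rightarrow> int ^ 'n) \<Rightarrow> nat \<Rightarrow> (int ^ 'n) set" where
  "Mset a m = {v \<in> VZ a m. rv v \<in> coneA a m}"

definition ZAplus :: "(nat \<Rightarrow> int ^ 'n) \<Rightarrow> nat \<Rightarrow> (int ^ 'n) set" where
  "ZAplus a m = {(\<chi> i. \<Sum>j=0..m. z j * a j $ i) | z. True}"

definition PA :: "(nat \<Rightarrow> int ^ 'n) \<Rightarrow> nat \<Rightarrow> (real ^ 'n) set" where
  "PA a m = {x. \<exists>c. (\<forall>j\<in>{1..m}. 0 \<le> c j \<and> c j < 1) \<and> x = (\<Sum>j=1..m. c j *\<^sub>R rv (a j))}"

definition Bset :: "(nat \<Rightarrow> int ^ 'n) \<Rightarrow> nat \<Rightarrow> (int ^ 'n) set" where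
  "Bset a m = {v \<in> VZ a m. rv v \<in> PA a m}"

definition Rk :: "(nat \<Rightarrow> int ^ 'n) \<Rightarrow> nat \<Rightarrow> (int ^ 'n) set \<Rightarrow> nat" where
  "Rk a m Ck = card {v \<in> Bset a m \<inter> Ck.
      \<exists>c. (\<forall>j\<in>{1..m}. 0 < c j) \<and> rv v = (\<Sum>j=1..m. c j *\<^sub>R rv (a j))}"

text \<open>Elements of S'_k are finitely supported coefficient functions u \<mapsto> coefficient of x^u.\<close>
definition Sk :: "(int ^ 'n) set \<Rightarrow> (int ^ 'n \<Rightarrow> K) set" where
  "Sk Mk = {g. finite {v. g v \<noteq> 0} \<and> {v. g v \<noteq> 0} \<subseteq> Mk}"

definition xmon :: "int ^ 'n \<Rightarrow> (int ^ 'n \<Rightarrow> K)" where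
  "xmon u = (\<lambda>v. if v = u then 1 else 0)"

text \<open>D_i = x_i d/dx_i + x_i (d f_lambda / d x_i), acting on coefficient functions, where
  f_lambda = sum_j l j x^(a j) - l 0 lambda x^(a 0).\<close>
definition Dop :: "(nat \<Rightarrow> int ^ 'n) \<Rightarrow> (nat \<Rightarrow> nat) \<Rightarrow> nat \<Rightarrow> 'n \<Rightarrow>
    (int ^ 'n \<Rightarrow> K) \<Rightarrow> (int ^ 'n \<Rightarrow> K)" where
  "Dop a l m i g = (\<lambda>v. of_int (v $ i) * g v
      + (\<Sum>j=1..m. of_int (int (l j) * a j $ i) * g (v - a j))
      - of_int (int (l 0) * a 0 $ i) * lam * g (v - a 0))"

definition DImg :: "(nat \<Rightarrow> int ^ 'n) \<Rightarrow> (nat \<Rightarrow> nat) \<Rightarrow> nat \<Rightarrow> (int ^ 'n) set \<Rightarrow>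
    (int ^ 'n \<Rightarrow> K) set" where
  "DImg a l m Mk = {(\<lambda>v. \<Sum>i\<in>UNIV. Dop a l m i (G i) v) | G. \<forall>i. G i \<in> Sk Mk}"

definition kspan :: "('a \<Rightarrow> K) set \<Rightarrow> ('a \<Rightarrow> K) set" where
  "kspan X = {h. \<exists>F c. finite F \<and> F \<subseteq> X \<and> h = (\<lambda>v. \<Sum>b\<in>F. c b * b v)}"

text \<open>Dimension of the subspace of the quotient S/U generated by the classes of the elements of X
  equals d: there is a basis of d classes, i.e. a finite set B of d elements of span X whose
  classes are linearly independent modulo U and span the classes of X.\<close>
definition quot_dim_eq :: "('a \<Rightarrow> K) set \<Rightarrow> ('a \<Rightarrow> K) set \<Rightarrow> nat \<Rightarrow> bool" where
  "quot_dim_eq U X d \<longleftrightarrow> (\<exists>B. finite B \<and> card B = d \<and> B \<subseteq> kspan X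
     \<and> (\<forall>c. (\<lambda>v. \<Sum>b\<in>B. c b * b v) \<in> U \<longrightarrow> (\<forall>b\<in>B. c b = 0))
     \<and> (\<forall>x\<in>X. \<exists>c. (\<lambda>v. x v - (\<Sum>b\<in>B. c b * b v)) \<in> U))"

end

theory Submission
  imports Defs "HOL-Computational_Algebra.Polynomial_Factorial" "HOL-Computational_Algebra.Polynomial_FPS"
begin

lemma rv_add: "rv (x + y) = rv x + rv y" by (simp add: rv_def vec_eq_iff)
lemma rv_diff: "rv (x - y) = rv x - rv y" by (simp add: rv_def vec_eq_iff)
lemma rv_zero: "rv 0 = 0" by (simp add: rv_def vec_eq_iff)
lemma rv_inj: "rv x = rv y \<Longrightarrow> x = y" by (simp add: rv_def vec_eq_iff)
lemma rv_comp: "rv v $ i = real_of_int (v $ i)" by (simp add: rv_def)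

lemma finite_int_box: "finite {v :: int ^ 'n. \<forall>i. \<bar>v $ i\<bar> \<le> R}"
proof -
  have "{v :: int ^ 'n. \<forall>i. \<bar>v $ i\<bar> \<le> R} \<subseteq> (\<lambda>f. \<chi> i. f i) ` (PiE UNIV (\<lambda>i. {-R..R}))"
  proof
    fix v :: "int ^ 'n" assume "v \<in> {v. \<forall>i. \<bar>v $ i\<bar> \<le> R}"
    then have "\<forall>i. v $ i \<in> {-R..R}"
    proof (intro allI)
      fix i assume "v \<in> {v. \<forall>i. \<bar>v $ i\<bar> \<le> R}"
      then have "\<bar>v $ i\<bar> \<le> R" by simp
      then show "v $ i \<in> {-R..R}" by (simp add: abs_le_iff)
    qed
    then have "(\<lambda>i. v $ i) \<in> PiE UNIV (\<lambda>i. {-R..R})" by auto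
    moreover have "v = (\<chi> i. (\<lambda>i. v $ i) i)" by simp
    ultimately show "v \<in> (\<lambda>f. \<chi> i. f i) ` (PiE UNIV (\<lambda>i. {-R..R}))" by blast
  qed
  moreover have "finite (PiE (UNIV::'n set) (\<lambda>i. {-R..R}))" by (intro finite_PiE) auto
  ultimately show ?thesis by (meson finite_imageI finite_subset)
qed

lemma linear_inner_rep:
  fixes f :: "real ^ 'n \<Rightarrow> real"
  assumes "linear f" shows "f x = (\<chi> i. f (axis i 1)) \<bullet> x"
proof -
  have "x = (\<Sum>i\<in>UNIV. x $ i *\<^sub>R axis i 1)"
    using basis_expansion[of x] by (simp add: scalar_mult_eq_scaleR)
  then have "f x = f (\<Sum>i\<in>UNIV. x $ i *\<^sub>R axis i 1)" by simp
  also have "\<dots> = (\<Sum>i\<in>UNIV. x $ i * f (axis i 1))"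
    using assms by (simp add: linear_sum linear_scale)
  also have "\<dots> = (\<chi> i. f (axis i 1)) \<bullet> x" by (simp add: inner_vec_def mult.commute)
  finally show ?thesis .
qed

lemma exists_dual:
  fixes a :: "nat \<Rightarrow> int ^ 'n"
  assumes inj: "inj_on a {1..m}" and indep: "independent (rv ` a ` {1..m})"
  shows "\<exists>\<phi>::nat \<Rightarrow> real^'n. \<forall>j\<in>{1..m}. \<forall>k\<in>{1..m}. \<phi> j \<bullet> rv (a k) = (if j = k then 1 else 0)"
proof -
  have injrv: "inj_on (\<lambda>k. rv (a k)) {1..m}"
    using inj rv_inj unfolding inj_on_def by metis
  have "\<forall>j. \<exists>f. linear f \<and> (\<forall>x\<in>rv ` a ` {1..m}. f x = (if x = rv (a j) then (1::real) else 0))"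
  proof
    fix j
    show "\<exists>f. linear f \<and> (\<forall>x\<in>rv ` a ` {1..m}. f x = (if x = rv (a j) then (1::real) else 0))"
      by (rule linear_independent_extend[OF indep])
  qed
  then have "\<exists>f. \<forall>j. linear (f j) \<and> (\<forall>x\<in>rv ` a ` {1..m}. f j x = (if x = rv (a j) then (1::real) else 0))"
    by (rule choice)
  then obtain f where f0: "\<forall>j. linear (f j) \<and> (\<forall>x\<in>rv ` a ` {1..m}. f j x = (if x = rv (a j) then (1::real) else 0))"
    by (elim exE)
  have f1: "linear (f j)" for j using conjunct1[OF spec[OF f0, of j]] .
  have f2: "f j x = (if x = rv (a j) then (1::real) else 0)" if "x\<in>rv ` a ` {1..m}" for j x
    using bspec[OF conjunct2[OF spec[OF f0, of j]] that] .
  note f = f1 f2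
  define \<phi> where "\<phi> j = (\<chi> i. f j (axis i 1))" for j
  have "\<forall>j\<in>{1..m}. \<forall>k\<in>{1..m}. \<phi> j \<bullet> rv (a k) = (if j = k then 1 else 0)"
  proof (intro ballI)
    fix j k assume jk: "j \<in> {1..m}" "k \<in> {1..m}"
    have "\<phi> j \<bullet> rv (a k) = f j (rv (a k))" unfolding \<phi>_def by (rule linear_inner_rep[OF f(1), symmetric])
    also have "\<dots> = (if rv (a k) = rv (a j) then 1 else 0)" using f(2)[of "rv (a k)" j] jk by simp
    also have "\<dots> = (if j = k then 1 else 0)" using inj_on_eq_iff[OF injrv jk(2) jk(1)] by auto
    finally show "\<phi> j \<bullet> rv (a k) = (if j = k then 1 else 0)" .
  qed
  then show ?thesis by blast
qed


locale P91 =
  fixes a :: "nat \<Rightarrow> int ^ 'n" and l :: "nat \<Rightarrow> nat" and m :: nat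
    and w :: "int ^ 'n" and Ck :: "(int ^ 'n) set" and \<phi> :: "nat \<Rightarrow> real ^ 'n"
  assumes inj: "inj_on a {1..m}"
    and indep: "independent (rv ` a ` {1..m})"
    and lpos: "\<forall>j\<in>{0..m}. 0 < l j"
    and rel: "(\<chi> i. int (l 0) * a 0 $ i) = (\<chi> i. \<Sum>j=1..m. int (l j) * a j $ i)"
    and l0: "l 0 = (\<Sum>j=1..m. l j)"
    and wV: "w \<in> VZ a m" and Ckdef: "Ck = (\<lambda>g. w + g) ` ZAplus a m"
    and dual: "\<And>j k. j \<in> {1..m} \<Longrightarrow> k \<in> {1..m} \<Longrightarrow> \<phi> j \<bullet> rv (a k) = (if j = k then 1 else 0)"
begin

definition crd :: "nat \<Rightarrow> int ^ 'n \<Rightarrow> real" where "crd j v = \<phi> j \<bullet> rv v"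
definition Aspan :: "(real ^ 'n) set" where "Aspan = span (rv ` a ` {1..m})"

lemma crd_add: "crd j (u + v) = crd j u + crd j v"
  by (simp add: crd_def rv_add inner_add_right)
lemma crd_diff: "crd j (u - v) = crd j u - crd j v"
  by (simp add: crd_def rv_diff inner_diff_right)
lemma crd_a: "j \<in> {1..m} \<Longrightarrow> k \<in> {1..m} \<Longrightarrow> crd j (a k) = (if j = k then 1 else 0)"
  by (simp add: crd_def dual)

lemma injrv: "inj_on (\<lambda>k. rv (a k)) {1..m}"
  using inj rv_inj unfolding inj_on_def by metis

lemma coord_sum:
  assumes k: "k \<in> {1..m}"
  shows "\<phi> k \<bullet> (\<Sum>j=1..m. c j *\<^sub>R rv (a j)) = c k"
proof -
  have "\<phi> k \<bullet> (\<Sum>j=1..m. c j *\<^sub>R rv (a j)) = (\<Sum>j=1..m. c j * (\<phi> k \<bullet> rv (a j)))"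
    by (simp add: inner_sum_right)
  also have "\<dots> = (\<Sum>j=1..m. (if k = j then c j else 0))"
  proof (rule sum.cong[OF refl])
    fix j assume "j \<in> {1..m}"
    then show "c j * (\<phi> k \<bullet> rv (a j)) = (if k = j then c j else 0)" using dual[OF k] by simp
  qed
  also have "\<dots> = c k" using k by (simp add: sum.delta)
  finally show ?thesis .
qed

lemma span_rep:
  assumes x: "x \<in> Aspan"
  shows "x = (\<Sum>j=1..m. (\<phi> j \<bullet> x) *\<^sub>R rv (a j))"
proof -
  have fin: "finite (rv ` a ` {1..m})" by simp
  obtain u where u: "x = (\<Sum>v\<in>rv ` a ` {1..m}. u v *\<^sub>R v)"
    using x unfolding Aspan_def span_finite[OF fin] by blast
  have img: "rv ` a ` {1..m} = (\<lambda>k. rv (a k)) ` {1..m}" by auto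
  have x2: "x = (\<Sum>j=1..m. u (rv (a j)) *\<^sub>R rv (a j))"
    using u unfolding img sum.reindex[OF injrv] by (simp add: o_def)
  have "\<phi> k \<bullet> x = u (rv (a k))" if "k \<in> {1..m}" for k
    unfolding x2 by (rule coord_sum[OF that])
  then show ?thesis
    by (subst x2) (intro sum.cong refl, simp)
qed

lemma sum_in_Aspan: "(\<Sum>j=1..m. c j *\<^sub>R rv (a j)) \<in> Aspan"
  unfolding Aspan_def by (intro span_sum span_scale span_base) auto

lemma VZ_iff: "v \<in> VZ a m \<longleftrightarrow> rv v \<in> Aspan"
  by (simp add: VZ_def Aspan_def)

lemma crd_rep: "v \<in> VZ a m \<Longrightarrow> rv v = (\<Sum>j=1..m. crd j v *\<^sub>R rv (a j))"
  unfolding crd_def VZ_iff by (rule span_rep)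

lemma crd_unique:
  assumes "rv v = (\<Sum>j=1..m. c j *\<^sub>R rv (a j))" "k \<in> {1..m}"
  shows "crd k v = c k"
proof -
  have "crd k v = \<phi> k \<bullet> (\<Sum>j=1..m. c j *\<^sub>R rv (a j))" using assms(1) unfolding crd_def by simp
  also have "\<dots> = c k" by (rule coord_sum[OF assms(2)])
  finally show ?thesis .
qed

lemma a_VZ: "j \<in> {1..m} \<Longrightarrow> a j \<in> VZ a m"
  unfolding VZ_def by (intro CollectI span_base) auto

lemma VZ_add: "u \<in> VZ a m \<Longrightarrow> v \<in> VZ a m \<Longrightarrow> u + v \<in> VZ a m"
  unfolding VZ_def by (simp add: rv_add span_add)
lemma VZ_diff: "u \<in> VZ a m \<Longrightarrow> v \<in> VZ a m \<Longrightarrow> u - v \<in> VZ a m"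
  unfolding VZ_def by (simp add: rv_diff span_diff)

lemma rv_a0: "real (l 0) *\<^sub>R rv (a 0) = (\<Sum>j=1..m. real (l j) *\<^sub>R rv (a j))"
proof (subst vec_eq_iff, intro allI)
  fix i
  have "int (l 0) * a 0 $ i = (\<Sum>j=1..m. int (l j) * a j $ i)"
    using arg_cong[OF rel, of "\<lambda>v. v $ i"] by simp
  then have "real_of_int (int (l 0) * a 0 $ i) = real_of_int (\<Sum>j=1..m. int (l j) * a j $ i)"
    by simp
  then show "(real (l 0) *\<^sub>R rv (a 0)) $ i = (\<Sum>j=1..m. real (l j) *\<^sub>R rv (a j)) $ i"
    by (simp add: rv_def sum_component)
qed

lemma l0pos: "0 < l 0" using bspec[OF lpos, of 0] by simp

lemma rv_a0': "rv (a 0) = (\<Sum>j=1..m. (real (l j) / real (l 0)) *\<^sub>R rv (a j))"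
proof -
  have "rv (a 0) = (1 / real (l 0)) *\<^sub>R (real (l 0) *\<^sub>R rv (a 0))" using l0pos by simp
  also have "\<dots> = (\<Sum>j=1..m. (real (l j) / real (l 0)) *\<^sub>R rv (a j))"
    unfolding rv_a0 by (simp add: scaleR_sum_right)
  finally show ?thesis .
qed

lemma a0_VZ: "a 0 \<in> VZ a m"
  unfolding VZ_iff by (subst rv_a0') (rule sum_in_Aspan)

lemma crd_a0: "k \<in> {1..m} \<Longrightarrow> crd k (a 0) = real (l k) / real (l 0)"
  by (rule crd_unique[OF rv_a0'])

lemma aj_VZ: "a j \<in> VZ a m" if "j \<le> m"
proof (cases "j = 0")
  case True then show ?thesis using a0_VZ by simp
next
  case False then show ?thesis using a_VZ[of j] that by simp
qed

lemma cone_iff: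
  assumes v: "v \<in> VZ a m"
  shows "rv v \<in> coneA a m \<longleftrightarrow> (\<forall>j\<in>{1..m}. 0 \<le> crd j v)"
proof
  assume "rv v \<in> coneA a m"
  then obtain c where c: "\<forall>j\<in>{1..m}. 0 \<le> c j" "rv v = (\<Sum>j=1..m. c j *\<^sub>R rv (a j))"
    unfolding coneA_def mem_Collect_eq by (elim exE conjE) (rule that)
  show "\<forall>j\<in>{1..m}. 0 \<le> crd j v"
    using c crd_unique[OF c(2)] by simp
next
  assume "\<forall>j\<in>{1..m}. 0 \<le> crd j v"
  then show "rv v \<in> coneA a m"
    unfolding coneA_def using crd_rep[OF v] by (intro CollectI exI[of _ "\<lambda>j. crd j v"] conjI)
qed

lemma PA_iff:
  assumes v: "v \<in> VZ a m"
  shows "rv v \<in> PA a m \<longleftrightarrow> (\<forall>j\<in>{1..m}. 0 \<le> crd j v \<and> crd j v < 1)"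
proof
  assume "rv v \<in> PA a m"
  then obtain c where c: "\<forall>j\<in>{1..m}. 0 \<le> c j \<and> c j < 1" "rv v = (\<Sum>j=1..m. c j *\<^sub>R rv (a j))"
    unfolding PA_def mem_Collect_eq by (elim exE conjE) (rule that)
  show "\<forall>j\<in>{1..m}. 0 \<le> crd j v \<and> crd j v < 1"
    using c crd_unique[OF c(2)] by simp
next
  assume "\<forall>j\<in>{1..m}. 0 \<le> crd j v \<and> crd j v < 1"
  then show "rv v \<in> PA a m"
    unfolding PA_def using crd_rep[OF v] by (intro CollectI exI[of _ "\<lambda>j. crd j v"] conjI)
qed

lemma pos_iff:
  assumes v: "v \<in> VZ a m"
  shows "(\<exists>c. (\<forall>j\<in>{1..m}. 0 < c j) \<and> rv v = (\<Sum>j=1..m. c j *\<^sub>R rv (a j)))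
     \<longleftrightarrow> (\<forall>j\<in>{1..m}. 0 < crd j v)"
proof
  assume "\<exists>c. (\<forall>j\<in>{1..m}. 0 < c j) \<and> rv v = (\<Sum>j=1..m. c j *\<^sub>R rv (a j))"
  then obtain c where c: "\<forall>j\<in>{1..m}. 0 < c j" "rv v = (\<Sum>j=1..m. c j *\<^sub>R rv (a j))"
    by (elim exE conjE) (rule that)
  show "\<forall>j\<in>{1..m}. 0 < crd j v"
    using c crd_unique[OF c(2)] by simp
next
  assume "\<forall>j\<in>{1..m}. 0 < crd j v"
  then show "\<exists>c. (\<forall>j\<in>{1..m}. 0 < c j) \<and> rv v = (\<Sum>j=1..m. c j *\<^sub>R rv (a j))"
    using crd_rep[OF v] by (intro exI[of _ "\<lambda>j. crd j v"]) simp
qed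

lemma coneA_Aspan: "coneA a m \<subseteq> Aspan"
  unfolding coneA_def using sum_in_Aspan by blast

lemma coneA_coord: "y \<in> coneA a m \<Longrightarrow> j \<in> {1..m} \<Longrightarrow> 0 \<le> \<phi> j \<bullet> y"
  unfolding coneA_def using coord_sum by auto

lemma in_coneA:
  assumes y: "y \<in> Aspan" and pos: "\<forall>j\<in>{1..m}. 0 \<le> \<phi> j \<bullet> y"
  shows "y \<in> coneA a m"
proof -
  have "y = (\<Sum>j=1..m. (\<phi> j \<bullet> y) *\<^sub>R rv (a j))" by (rule span_rep[OF y])
  then show ?thesis unfolding coneA_def using pos by (intro CollectI exI[of _ "\<lambda>j. \<phi> j \<bullet> y"] conjI)
qed

lemma aff_hull_sub: "affine hull (coneA a m) \<subseteq> Aspan"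
  by (rule hull_minimal[OF coneA_Aspan]) (simp add: Aspan_def subspace_imp_affine)

lemma relint_iff_gen:
  assumes x: "x \<in> Aspan"
  shows "x \<in> rel_interior (coneA a m) \<longleftrightarrow> (\<forall>j\<in>{1..m}. 0 < \<phi> j \<bullet> x)"
proof
  assume xi: "x \<in> rel_interior (coneA a m)"
  then obtain e where e: "e > 0" "ball x e \<inter> affine hull (coneA a m) \<subseteq> coneA a m" and xc: "x \<in> coneA a m"
    unfolding mem_rel_interior_ball by blast
  show "\<forall>j\<in>{1..m}. 0 < \<phi> j \<bullet> x"
  proof (rule ccontr)
    assume "\<not> (\<forall>j\<in>{1..m}. 0 < \<phi> j \<bullet> x)"
    then obtain j where j: "j \<in> {1..m}" "\<phi> j \<bullet> x \<le> 0" by auto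
    define t where "t = e / (2 * (norm (rv (a j)) + 1))"
    have "0 < norm (rv (a j)) + 1" using norm_ge_zero[of "rv (a j)"] by linarith
    then have np: "0 < 2 * (norm (rv (a j)) + 1)" by simp
    have tpos: "t > 0" unfolding t_def by (rule divide_pos_pos[OF e(1) np])
    have "t * norm (rv (a j)) < e"
    proof -
      have "t * norm (rv (a j)) \<le> t * (norm (rv (a j)) + 1)" using tpos by simp
      also have "\<dots> = e / 2" unfolding t_def using np by (simp add: field_simps)
      also have "\<dots> < e" using e(1) by simp
      finally show ?thesis .
    qed
    define y where "y = x - t *\<^sub>R rv (a j)"
    have "dist x y = t * norm (rv (a j))" unfolding y_def dist_norm using tpos by simp
    then have yb: "y \<in> ball x e" using \<open>t * norm (rv (a j)) < e\<close> by (simp add: dist_commute)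
    have x1: "x + rv (a j) \<in> coneA a m"
    proof -
      have "x + rv (a j) \<in> Aspan"
        unfolding Aspan_def using j by (intro span_add[OF x[unfolded Aspan_def] span_base]) auto
      moreover have "\<forall>k\<in>{1..m}. 0 \<le> \<phi> k \<bullet> (x + rv (a j))"
        using coneA_coord[OF xc] dual j by (simp add: inner_add_right)
      ultimately show ?thesis by (rule in_coneA)
    qed
    have "y = (1 + t) *\<^sub>R x + (- t) *\<^sub>R (x + rv (a j))"
      unfolding y_def by (simp add: algebra_simps)
    moreover have "(1 + t) *\<^sub>R x + (- t) *\<^sub>R (x + rv (a j)) \<in> affine hull (coneA a m)"
      by (rule mem_affine[OF affine_affine_hull]) (use xc x1 hull_subset[of "coneA a m" affine] in auto)
    ultimately have "y \<in> affine hull (coneA a m)" by simp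
    then have "y \<in> coneA a m" using yb e(2) by blast
    then have "0 \<le> \<phi> j \<bullet> y" using coneA_coord j by blast
    moreover have "\<phi> j \<bullet> y = \<phi> j \<bullet> x - t" unfolding y_def using dual j by (simp add: inner_diff_right)
    ultimately show False using j tpos by simp
  qed
next
  assume pos: "\<forall>j\<in>{1..m}. 0 < \<phi> j \<bullet> x"
  define T where "T = (\<Inter>j\<in>{1..m}. {y. 0 < \<phi> j \<bullet> y})"
  have oT: "open T" unfolding T_def by (intro open_INT) (auto intro: open_halfspace_gt)
  have sub: "T \<inter> Aspan \<subseteq> coneA a m"
  proof
    fix y assume "y \<in> T \<inter> Aspan"
    then have "\<forall>j\<in>{1..m}. 0 \<le> \<phi> j \<bullet> y" "y \<in> Aspan" unfolding T_def by auto
    then show "y \<in> coneA a m" by (intro in_coneA) auto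
  qed
  have xT: "x \<in> T" using pos unfolding T_def by auto
  have xc: "x \<in> coneA a m" using sub xT x by blast
  show "x \<in> rel_interior (coneA a m)"
    unfolding mem_rel_interior using oT xT xc sub aff_hull_sub by blast
qed

lemma relint_iff:
  assumes v: "v \<in> VZ a m"
  shows "rv v \<in> rel_interior (coneA a m) \<longleftrightarrow> (\<forall>j\<in>{1..m}. 0 < crd j v)"
  using relint_iff_gen[of "rv v"] v unfolding VZ_iff crd_def by simp

end

context P91 begin

lemma zap_mem: "(\<chi> i. \<Sum>j=0..m. z j * a j $ i) \<in> ZAplus a m"
  unfolding ZAplus_def by blast

lemma zap_add:
  assumes "x \<in> ZAplus a m" "y \<in> ZAplus a m" shows "x + y \<in> ZAplus a m"
proof -
  obtain z1 where z1: "x = (\<chi> i. \<Sum>j=0..m. z1 j * a j $ i)" using assms(1) unfolding ZAplus_def by blast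
  obtain z2 where z2: "y = (\<chi> i. \<Sum>j=0..m. z2 j * a j $ i)" using assms(2) unfolding ZAplus_def by blast
  have "x + y = (\<chi> i. \<Sum>j=0..m. (z1 j + z2 j) * a j $ i)"
    unfolding z1 z2 by (simp add: vec_eq_iff distrib_right sum.distrib)
  then show ?thesis using zap_mem by simp
qed

lemma zap_neg:
  assumes "x \<in> ZAplus a m" shows "- x \<in> ZAplus a m"
proof -
  obtain z1 where z1: "x = (\<chi> i. \<Sum>j=0..m. z1 j * a j $ i)" using assms(1) unfolding ZAplus_def by blast
  have "- x = (\<chi> i. \<Sum>j=0..m. (- z1 j) * a j $ i)"
    unfolding z1 by (simp add: vec_eq_iff sum_negf)
  then show ?thesis using zap_mem[of "\<lambda>j. - z1 j"] by simp
qed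

lemma zap_diff: "x \<in> ZAplus a m \<Longrightarrow> y \<in> ZAplus a m \<Longrightarrow> x - y \<in> ZAplus a m"
  using zap_add[of x "- y"] zap_neg[of y] by simp

lemma zap_a: assumes "j \<le> m" shows "a j \<in> ZAplus a m"
proof -
  have "(\<Sum>k=0..m. (if k = j then 1 else 0) * a k $ i) = a j $ i" for i
  proof -
    have "(\<Sum>k=0..m. (if k = j then 1 else 0) * a k $ i) = (\<Sum>k=0..m. if k = j then a k $ i else 0)"
      by (intro sum.cong) auto
    also have "\<dots> = a j $ i" using assms by (simp add: sum.delta')
    finally show ?thesis .
  qed
  then have "a j = (\<chi> i. \<Sum>k=0..m. (if k = j then 1 else 0) * a k $ i)"
    by (simp add: vec_eq_iff)
  then show ?thesis using zap_mem[of "\<lambda>k. if k = j then 1 else 0"] by simp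
qed

lemma rv_zap: "rv (\<chi> i. \<Sum>j=0..m. z j * a j $ i) = (\<Sum>j=0..m. real_of_int (z j) *\<^sub>R rv (a j))"
  by (simp add: vec_eq_iff rv_def sum_component)

lemma zap_VZ: assumes "x \<in> ZAplus a m" shows "x \<in> VZ a m"
proof -
  obtain z1 where z1: "x = (\<chi> i. \<Sum>j=0..m. z1 j * a j $ i)" using assms(1) unfolding ZAplus_def by blast
  have "rv (a j) \<in> Aspan" if "j \<in> {0..m}" for j using aj_VZ[of j] that unfolding VZ_iff by simp
  then have "(\<Sum>j=0..m. real_of_int (z1 j) *\<^sub>R rv (a j)) \<in> Aspan"
    unfolding Aspan_def by (intro span_sum span_scale) simp
  then show ?thesis unfolding VZ_iff z1 rv_zap .
qed

lemma Ck_iff: "u \<in> Ck \<longleftrightarrow> u - w \<in> ZAplus a m"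
proof
  assume "u \<in> Ck"
  then obtain g where "g \<in> ZAplus a m" "u = w + g" unfolding Ckdef by blast
  then show "u - w \<in> ZAplus a m" by simp
next
  assume "u - w \<in> ZAplus a m"
  moreover have "u = w + (u - w)" by simp
  ultimately show "u \<in> Ck" unfolding Ckdef by blast
qed

lemma Ck_add: "u \<in> Ck \<Longrightarrow> z \<in> ZAplus a m \<Longrightarrow> u + z \<in> Ck"
  unfolding Ck_iff using zap_add[of "u - w" z] by (simp add: algebra_simps)
lemma Ck_diff: "u \<in> Ck \<Longrightarrow> z \<in> ZAplus a m \<Longrightarrow> u - z \<in> Ck"
  unfolding Ck_iff using zap_diff[of "u - w" z] by (simp add: algebra_simps)
lemma Ck_VZ: "u \<in> Ck \<Longrightarrow> u \<in> VZ a m"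
  unfolding Ck_iff using zap_VZ[of "u - w"] VZ_add[OF wV, of "u - w"] by simp

definition Mk :: "(int ^ 'n) set" where "Mk = Mset a m \<inter> Ck"
definition intr :: "int ^ 'n \<Rightarrow> bool" where "intr u \<longleftrightarrow> (\<forall>j\<in>{1..m}. 0 < crd j u)"
definition wt :: "int ^ 'n \<Rightarrow> real" where "wt u = (\<Sum>j=1..m. crd j u)"

lemma Mk_iff: "u \<in> Mk \<longleftrightarrow> u \<in> Ck \<and> (\<forall>j\<in>{1..m}. 0 \<le> crd j u)"
  unfolding Mk_def Mset_def using cone_iff Ck_VZ by blast

lemma wt_add: "wt (u + v) = wt u + wt v"
  unfolding wt_def by (simp add: crd_add sum.distrib)
lemma wt_diff: "wt (u - v) = wt u - wt v"
  unfolding wt_def by (simp add: crd_diff sum_subtractf)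
lemma wt_a: assumes "j \<in> {1..m}" shows "wt (a j) = 1"
proof -
  have "wt (a j) = (\<Sum>k=1..m. if k = j then 1 else 0)"
    unfolding wt_def
  proof (rule sum.cong[OF refl])
    fix k assume "k \<in> {1..m}"
    then show "crd k (a j) = (if k = j then 1 else 0)" using crd_a[of k j] assms by simp
  qed
  also have "\<dots> = 1" using assms by (simp add: sum.delta)
  finally show ?thesis .
qed
lemma wt_a0: "wt (a 0) = 1"
proof -
  have "wt (a 0) = (\<Sum>k=1..m. real (l k) / real (l 0))"
    unfolding wt_def by (intro sum.cong refl) (simp add: crd_a0)
  also have "\<dots> = (\<Sum>k=1..m. real (l k)) / real (l 0)" by (simp add: sum_divide_distrib)
  also have "\<dots> = real (\<Sum>k=1..m. l k) / real (l 0)" by (simp only: of_nat_sum)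
  also have "\<dots> = 1" unfolding l0[symmetric] using l0pos by simp
  finally show ?thesis .
qed

lemma finite_wt: "finite {u. u \<in> VZ a m \<and> (\<forall>j\<in>{1..m}. 0 \<le> crd j u) \<and> wt u \<le> W}"
proof -
  define A where "A = (\<Sum>j=1..m. \<Sum>i\<in>UNIV. \<bar>real_of_int (a j $ i)\<bar>)"
  define R where "R = \<lceil>max W 0 * A\<rceil>"
  have A0: "0 \<le> A" unfolding A_def by (intro sum_nonneg) auto
  have aA: "\<bar>real_of_int (a j $ i)\<bar> \<le> A" if "j \<in> {1..m}" for j i
  proof -
    have "\<bar>real_of_int (a j $ i)\<bar> \<le> (\<Sum>i\<in>UNIV. \<bar>real_of_int (a j $ i)\<bar>)"
      by (rule member_le_sum) auto
    also have "\<dots> \<le> A" unfolding A_def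
      by (rule member_le_sum) (use that in \<open>auto intro: sum_nonneg\<close>)
    finally show ?thesis .
  qed
  have "{u. u \<in> VZ a m \<and> (\<forall>j\<in>{1..m}. 0 \<le> crd j u) \<and> wt u \<le> W} \<subseteq> {v. \<forall>i. \<bar>v $ i\<bar> \<le> R}"
  proof (intro subsetI CollectI allI)
    fix u i assume "u \<in> {u. u \<in> VZ a m \<and> (\<forall>j\<in>{1..m}. 0 \<le> crd j u) \<and> wt u \<le> W}"
    then have u: "u \<in> VZ a m" "\<forall>j\<in>{1..m}. 0 \<le> crd j u" "wt u \<le> W" by auto
    have "real_of_int (u $ i) = rv u $ i" by (simp add: rv_def)
    also have "\<dots> = (\<Sum>j=1..m. crd j u * real_of_int (a j $ i))"
      by (subst crd_rep[OF u(1)]) (simp add: sum_component rv_def)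
    finally have ui: "real_of_int (u $ i) = (\<Sum>j=1..m. crd j u * real_of_int (a j $ i))" .
    have "\<bar>real_of_int (u $ i)\<bar> \<le> (\<Sum>j=1..m. \<bar>crd j u * real_of_int (a j $ i)\<bar>)"
      unfolding ui by (rule sum_abs)
    also have "\<dots> \<le> (\<Sum>j=1..m. crd j u * A)"
    proof (rule sum_mono)
      fix j assume j: "j \<in> {1..m}"
      have "\<bar>crd j u * real_of_int (a j $ i)\<bar> = crd j u * \<bar>real_of_int (a j $ i)\<bar>"
        using u(2) j by (simp add: abs_mult)
      also have "\<dots> \<le> crd j u * A" using u(2) j aA[OF j, of i] by (simp add: mult_left_mono)
      finally show "\<bar>crd j u * real_of_int (a j $ i)\<bar> \<le> crd j u * A" .
    qed
    also have "\<dots> = wt u * A" unfolding wt_def by (simp add: sum_distrib_right)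
    also have "\<dots> \<le> max W 0 * A" using u(3) A0 by (intro mult_right_mono) auto
    also have "\<dots> \<le> real_of_int R" unfolding R_def by (rule le_of_int_ceiling)
    finally have "real_of_int \<bar>u $ i\<bar> \<le> real_of_int R" by simp
    then show "\<bar>u $ i\<bar> \<le> R" by linarith
  qed
  then show ?thesis using finite_int_box finite_subset by blast
qed

lemma finite_Mk_wt: "finite {u \<in> Mk. wt u \<le> W}"
proof -
  have "{u \<in> Mk. wt u \<le> W} \<subseteq> {u. u \<in> VZ a m \<and> (\<forall>j\<in>{1..m}. 0 \<le> crd j u) \<and> wt u \<le> W}"
    using Mk_iff Ck_VZ by blast
  then show ?thesis using finite_wt finite_subset by blast
qed

definition Bint :: "(int ^ 'n) set" where
  "Bint = {b \<in> Bset a m \<inter> Ck. \<forall>j\<in>{1..m}. 0 < crd j b}"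

lemma Bint_iff: "b \<in> Bint \<longleftrightarrow> b \<in> Ck \<and> (\<forall>j\<in>{1..m}. 0 < crd j b \<and> crd j b < 1)"
  unfolding Bint_def Bset_def using PA_iff Ck_VZ by fastforce

lemma Bint_Mk: "b \<in> Bint \<Longrightarrow> b \<in> Mk \<and> intr b"
  unfolding Bint_iff Mk_iff intr_def by auto

lemma finite_Bint: "finite Bint"
proof -
  have "Bint \<subseteq> {u \<in> Mk. wt u \<le> real m}"
  proof
    fix b assume b: "b \<in> Bint"
    then have "b \<in> Mk" using Bint_Mk by blast
    moreover have "wt b \<le> (\<Sum>j=1..m. 1)" unfolding wt_def
    proof (rule sum_mono)
      fix j assume "j \<in> {1..m}"
      then show "crd j b \<le> 1" using bspec[OF conjunct2[OF b[unfolded Bint_iff]] \<open>j \<in> {1..m}\<close>] by simp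
    qed
    ultimately show "b \<in> {u \<in> Mk. wt u \<le> real m}" by simp
  qed
  then show ?thesis using finite_Mk_wt finite_subset by blast
qed

lemma Rk_eq: "Rk a m Ck = card Bint"
proof -
  have "{v \<in> Bset a m \<inter> Ck. \<exists>c. (\<forall>j\<in>{1..m}. 0 < c j) \<and> rv v = (\<Sum>j=1..m. c j *\<^sub>R rv (a j))} = Bint"
    unfolding Bint_def using pos_iff Ck_VZ by blast
  then show ?thesis unfolding Rk_def by simp
qed

end

definition kc :: "real \<Rightarrow> K" where "kc r = to_fract [:complex_of_real r:]"

lemma kc_add: "kc (x + y) = kc x + kc y"
proof -
  have "[:complex_of_real (x + y):] = [:complex_of_real x:] + [:complex_of_real y:]" by simp
  then show ?thesis unfolding kc_def by (simp only: to_fract_add)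
qed
lemma kc_mult: "kc (x * y) = kc x * kc y"
proof -
  have "[:complex_of_real (x * y):] = [:complex_of_real x:] * [:complex_of_real y:]" by simp
  then show ?thesis unfolding kc_def by (simp only: to_fract_mult)
qed
lemma kc_0: "kc 0 = 0" by (simp add: kc_def)
lemma kc_1: "kc 1 = 1" by (simp add: kc_def one_pCons[symmetric])
lemma kc_uminus: "kc (- x) = - kc x"
proof -
  have "[:complex_of_real (- x):] = - [:complex_of_real x:]" by simp
  then show ?thesis unfolding kc_def by (simp only: to_fract_uminus)
qed
lemma kc_diff: "kc (x - y) = kc x - kc y"
proof -
  have "[:complex_of_real (x - y):] = [:complex_of_real x:] - [:complex_of_real y:]" by simp
  then show ?thesis unfolding kc_def by (simp only: to_fract_diff)
qed
lemma kc_sum: "kc (\<Sum>i\<in>S. f i) = (\<Sum>i\<in>S. kc (f i))"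
  by (induction S rule: infinite_finite_induct) (simp_all add: kc_0 kc_add)
lemma kc_of_nat: "kc (real k) = of_nat k"
  by (induction k) (simp_all add: kc_0 kc_add kc_1)
lemma kc_of_int: "kc (real_of_int n) = of_int n"
proof (cases "n \<ge> 0")
  case True
  then have "n = int (nat n)" by simp
  then show ?thesis using kc_of_nat[of "nat n"] by (metis of_int_of_nat_eq)
next
  case False
  then have "n = - int (nat (- n))" by simp
  then show ?thesis using kc_of_nat[of "nat (- n)"] kc_uminus
    by (metis of_int_minus of_int_of_nat_eq)
qed
lemma kc_inv: "x \<noteq> 0 \<Longrightarrow> kc (1 / x) * kc x = 1"
  using kc_mult[of "1/x" x] kc_1 by simp

lemma lam_pow_ne1: "n > 0 \<Longrightarrow> 1 - lam ^ n \<noteq> 0"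
proof
  assume n: "n > 0" and h: "1 - lam ^ n = 0"
  have pw: "to_fract p ^ k = to_fract (p ^ k)" for p :: "complex poly" and k
    by (induction k) simp_all
  have "lam ^ n = to_fract ([:0, 1:] ^ n)" unfolding lam_def to_fract_def[symmetric] by (rule pw)
  moreover have "lam ^ n = 1" using h by simp
  ultimately have "to_fract ([:0, 1:] ^ n :: complex poly) = to_fract 1" by simp
  then have "([:0, 1:] ^ n :: complex poly) = 1" by (simp only: to_fract_eq_iff)
  then have "coeff ([:0, 1:] ^ n :: complex poly) n = coeff 1 n" by simp
  moreover have "coeff ([:0, 1:] ^ n :: complex poly) n = 1" using monom_altdef[of "1::complex" n] coeff_monom[of "1::complex" n n] by simp
  moreover have "coeff (1 :: complex poly) n = 0" using n by simp
  ultimately show False by simp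
qed

context P91 begin

abbreviation "DI \<equiv> DImg a l m Mk"

lemma Sk_zero: "(\<lambda>v. 0) \<in> Sk S" by (simp add: Sk_def)
lemma Sk_add: "f \<in> Sk S \<Longrightarrow> g \<in> Sk S \<Longrightarrow> (\<lambda>v. f v + g v) \<in> Sk S"
proof -
  assume f: "f \<in> Sk S" and g: "g \<in> Sk S"
  have "{v. f v + g v \<noteq> 0} \<subseteq> {v. f v \<noteq> 0} \<union> {v. g v \<noteq> 0}" by auto
  then show ?thesis using f g unfolding Sk_def by (auto intro: finite_subset)
qed
lemma Sk_scale: "f \<in> Sk S \<Longrightarrow> (\<lambda>v. c * f v) \<in> Sk S"
proof -
  assume f: "f \<in> Sk S"
  have "{v. c * f v \<noteq> 0} \<subseteq> {v. f v \<noteq> 0}" by auto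
  then show ?thesis using f unfolding Sk_def by (auto intro: finite_subset)
qed
lemma Sk_xmon: "u \<in> S \<Longrightarrow> xmon u \<in> Sk S"
proof -
  assume "u \<in> S"
  moreover have "{v. xmon u v \<noteq> 0} = {u}" by (auto simp: xmon_def)
  ultimately show ?thesis unfolding Sk_def by simp
qed

lemma Dop_add: "Dop a l m i (\<lambda>v. f v + g v) v = Dop a l m i f v + Dop a l m i g v"
  unfolding Dop_def by (simp add: algebra_simps sum.distrib)
lemma Dop_scale: "Dop a l m i (\<lambda>v. c * f v) v = c * Dop a l m i f v"
  unfolding Dop_def by (simp add: algebra_simps sum_distrib_left)
lemma Dop_zero: "Dop a l m i (\<lambda>v. 0) v = 0"
  unfolding Dop_def by simp

lemma DI_zero: "(\<lambda>v. 0) \<in> DI"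
proof -
  have "(\<lambda>v. 0::K) = (\<lambda>v. \<Sum>i\<in>UNIV. Dop a l m i ((\<lambda>i v. 0) i) v)" by (simp add: Dop_zero)
  moreover have "\<forall>i. (\<lambda>i v. 0::K) i \<in> Sk Mk" using Sk_zero by simp
  ultimately show ?thesis unfolding DImg_def by (intro CollectI exI[of _ "\<lambda>i v. 0"] conjI)
qed

lemma DI_add: assumes "d1 \<in> DI" "d2 \<in> DI" shows "(\<lambda>v. d1 v + d2 v) \<in> DI"
proof -
  obtain G1 where G1: "\<forall>i. G1 i \<in> Sk Mk" "d1 = (\<lambda>v. \<Sum>i\<in>UNIV. Dop a l m i (G1 i) v)"
    using assms(1) unfolding DImg_def by blast
  obtain G2 where G2: "\<forall>i. G2 i \<in> Sk Mk" "d2 = (\<lambda>v. \<Sum>i\<in>UNIV. Dop a l m i (G2 i) v)"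
    using assms(2) unfolding DImg_def by blast
  define G where "G i = (\<lambda>v. G1 i v + G2 i v)" for i
  have "\<forall>i. G i \<in> Sk Mk" unfolding G_def using G1(1) G2(1) Sk_add by blast
  moreover have "(\<lambda>v. d1 v + d2 v) = (\<lambda>v. \<Sum>i\<in>UNIV. Dop a l m i (G i) v)"
    unfolding G1(2) G2(2) G_def by (simp add: Dop_add sum.distrib)
  ultimately show ?thesis unfolding DImg_def by blast
qed

lemma DI_scale: assumes "d1 \<in> DI" shows "(\<lambda>v. c * d1 v) \<in> DI"
proof -
  obtain G1 where G1: "\<forall>i. G1 i \<in> Sk Mk" "d1 = (\<lambda>v. \<Sum>i\<in>UNIV. Dop a l m i (G1 i) v)"
    using assms(1) unfolding DImg_def by blast
  define G where "G i = (\<lambda>v. c * G1 i v)" for i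
  have "\<forall>i. G i \<in> Sk Mk" unfolding G_def using G1(1) Sk_scale by blast
  moreover have "(\<lambda>v. c * d1 v) = (\<lambda>v. \<Sum>i\<in>UNIV. Dop a l m i (G i) v)"
    unfolding G1(2) G_def by (simp add: Dop_scale sum_distrib_left)
  ultimately show ?thesis unfolding DImg_def by blast
qed

lemma kc_crd: "(\<Sum>i\<in>UNIV. kc (\<phi> j $ i) * of_int (x $ i)) = kc (crd j x)"
proof -
  have "kc (crd j x) = kc (\<Sum>i\<in>UNIV. \<phi> j $ i * real_of_int (x $ i))"
    unfolding crd_def inner_vec_def by (simp add: rv_def)
  also have "\<dots> = (\<Sum>i\<in>UNIV. kc (\<phi> j $ i) * of_int (x $ i))"
    by (simp add: kc_sum kc_mult kc_of_int)
  finally show ?thesis by simp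
qed

lemma Dj_DI:
  assumes j: "j \<in> {1..m}" and g: "g \<in> Sk Mk"
  shows "(\<lambda>v. kc (crd j v) * g v + of_nat (l j) * g (v - a j) - of_nat (l j) * lam * g (v - a 0)) \<in> DI"
proof -
  define G where "G i = (\<lambda>v. kc (\<phi> j $ i) * g v)" for i
  have GS: "\<forall>i. G i \<in> Sk Mk" unfolding G_def using g Sk_scale by blast
  have T: "(\<Sum>i\<in>UNIV. kc (\<phi> j $ i) * of_int (int (l k) * a k $ i)) = of_nat (l k) * kc (crd j (a k))" for k
  proof -
    have "(\<Sum>i\<in>UNIV. kc (\<phi> j $ i) * of_int (int (l k) * a k $ i))
        = of_nat (l k) * (\<Sum>i\<in>UNIV. kc (\<phi> j $ i) * of_int (a k $ i))"
      by (simp add: sum_distrib_left algebra_simps)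
    then show ?thesis by (simp add: kc_crd)
  qed
  have T1: "(\<Sum>k=1..m. of_nat (l k) * kc (crd j (a k)) * g (v - a k)) = of_nat (l j) * g (v - a j)" for v
  proof -
    have "(\<Sum>k=1..m. of_nat (l k) * kc (crd j (a k)) * g (v - a k)) = (\<Sum>k=1..m. if j = k then of_nat (l k) * g (v - a k) else 0)"
    proof (rule sum.cong[OF refl])
      fix k assume k: "k \<in> {1..m}"
      show "of_nat (l k) * kc (crd j (a k)) * g (v - a k) = (if j = k then of_nat (l k) * g (v - a k) else 0)"
        using crd_a[OF j k] by (simp add: kc_0 kc_1)
    qed
    also have "\<dots> = of_nat (l j) * g (v - a j)" using j by (simp add: sum.delta)
    finally show ?thesis .
  qed
  have T0: "of_nat (l 0) * kc (crd j (a 0)) = (of_nat (l j) :: K)"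
  proof -
    have "of_nat (l 0) * kc (crd j (a 0)) = kc (real (l 0)) * kc (real (l j) / real (l 0))"
      using crd_a0[OF j] kc_of_nat by simp
    also have "\<dots> = kc (real (l 0) * (real (l j) / real (l 0)))" by (simp only: kc_mult)
    also have "\<dots> = kc (real (l j))" using l0pos by simp
    also have "\<dots> = of_nat (l j)" by (rule kc_of_nat)
    finally show ?thesis .
  qed
  have "(\<Sum>i\<in>UNIV. Dop a l m i (G i) v) = kc (crd j v) * g v + of_nat (l j) * g (v - a j) - of_nat (l j) * lam * g (v - a 0)" for v
  proof -
    have "(\<Sum>i\<in>UNIV. Dop a l m i (G i) v) = (\<Sum>i\<in>UNIV. kc (\<phi> j $ i) * Dop a l m i g v)"
      unfolding G_def by (simp add: Dop_scale)
    also have "\<dots> = (\<Sum>i\<in>UNIV. kc (\<phi> j $ i) * of_int (v $ i)) * g v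
        + (\<Sum>k=1..m. (\<Sum>i\<in>UNIV. kc (\<phi> j $ i) * of_int (int (l k) * a k $ i)) * g (v - a k))
        - (\<Sum>i\<in>UNIV. kc (\<phi> j $ i) * of_int (int (l 0) * a 0 $ i)) * lam * g (v - a 0)"
      unfolding Dop_def
      by (simp add: algebra_simps sum.distrib sum_subtractf sum_distrib_left sum_distrib_right sum.swap[of _ UNIV])
    also have "\<dots> = kc (crd j v) * g v + of_nat (l j) * g (v - a j) - of_nat (l j) * lam * g (v - a 0)"
      unfolding T kc_crd T1 T0 ..
    finally show ?thesis .
  qed
  then have "(\<lambda>v. kc (crd j v) * g v + of_nat (l j) * g (v - a j) - of_nat (l j) * lam * g (v - a 0))
      = (\<lambda>v. \<Sum>i\<in>UNIV. Dop a l m i (G i) v)" by simp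
  then show ?thesis unfolding DImg_def using GS by blast
qed

end

context P91 begin

definition Gset :: "(int ^ 'n \<Rightarrow> K) set" where
  "Gset = {h. \<exists>c d. d \<in> DI \<and> h = (\<lambda>v. (\<Sum>b\<in>Bint. c b * xmon b v) + d v)}"

lemma G_intro:
  assumes "d \<in> DI" "\<And>v. h v = (\<Sum>b\<in>Bint. c b * xmon b v) + d v"
  shows "h \<in> Gset"
proof -
  have "h = (\<lambda>v. (\<Sum>b\<in>Bint. c b * xmon b v) + d v)" using assms(2) by (rule ext)
  then show ?thesis unfolding Gset_def using assms(1) by (intro CollectI exI[of _ c] exI[of _ d] conjI)
qed

lemma G_add: assumes "h1 \<in> Gset" "h2 \<in> Gset" shows "(\<lambda>v. h1 v + h2 v) \<in> Gset"
proof -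
  obtain c1 d1 where 1: "d1 \<in> DI" "h1 = (\<lambda>v. (\<Sum>b\<in>Bint. c1 b * xmon b v) + d1 v)"
    using assms(1) unfolding Gset_def by blast
  obtain c2 d2 where 2: "d2 \<in> DI" "h2 = (\<lambda>v. (\<Sum>b\<in>Bint. c2 b * xmon b v) + d2 v)"
    using assms(2) unfolding Gset_def by blast
  have "(\<lambda>v. d1 v + d2 v) \<in> DI" using DI_add 1 2 by blast
  then show ?thesis
    by (rule G_intro[where c="\<lambda>b. c1 b + c2 b"]) (simp add: 1 2 algebra_simps sum.distrib)
qed

lemma G_scale: assumes "h1 \<in> Gset" shows "(\<lambda>v. c * h1 v) \<in> Gset"
proof -
  obtain c1 d1 where 1: "d1 \<in> DI" "h1 = (\<lambda>v. (\<Sum>b\<in>Bint. c1 b * xmon b v) + d1 v)"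
    using assms(1) unfolding Gset_def by blast
  have "(\<lambda>v. c * d1 v) \<in> DI" using DI_scale 1 by blast
  then show ?thesis
    by (rule G_intro[where c="\<lambda>b. c * c1 b"]) (simp add: 1 algebra_simps sum_distrib_left)
qed

lemma G_DI: assumes "d \<in> DI" shows "d \<in> Gset"
proof -
  show ?thesis by (rule G_intro[OF assms, where c="\<lambda>b. 0"]) simp
qed

lemma G_zero: "(\<lambda>v. 0) \<in> Gset" using G_DI DI_zero by blast

lemma G_cong: "h \<in> Gset \<Longrightarrow> (\<And>v. h v = g v) \<Longrightarrow> g \<in> Gset"
proof -
  assume "h \<in> Gset" "\<And>v. h v = g v"
  moreover have "h = g" using \<open>\<And>v. h v = g v\<close> by (rule ext)
  ultimately show ?thesis by simp
qed

lemma G_b: assumes b: "b \<in> Bint" shows "xmon b \<in> Gset"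
proof -
  show ?thesis
  proof (rule G_intro[OF DI_zero, where c="\<lambda>b'. if b' = b then 1 else 0"])
    fix v
    have "(\<Sum>b'\<in>Bint. (if b' = b then 1 else 0) * xmon b' v) = (\<Sum>b'\<in>Bint. if b' = b then xmon b' v else 0)"
      by (intro sum.cong) auto
    also have "\<dots> = xmon b v" using b finite_Bint by (simp add: sum.delta')
    finally show "xmon b v = (\<Sum>b'\<in>Bint. (if b' = b then 1 else 0) * xmon b' v) + 0" by simp
  qed
qed

lemma G_diff: "h1 \<in> Gset \<Longrightarrow> h2 \<in> Gset \<Longrightarrow> (\<lambda>v. h1 v - h2 v) \<in> Gset"
proof -
  assume "h1 \<in> Gset" "h2 \<in> Gset"
  then have "(\<lambda>v. h1 v + (\<lambda>v. (- 1) * h2 v) v) \<in> Gset" using G_add G_scale by blast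
  then show ?thesis by (rule G_cong) simp
qed

definition nxt :: "nat \<Rightarrow> int ^ 'n \<Rightarrow> int ^ 'n" where "nxt j u = u - a j + a 0"

lemma nxt_props:
  assumes u: "u \<in> Mk" "intr u" and j: "j \<in> {1..m}" "1 \<le> crd j u"
  shows "nxt j u \<in> Mk" "intr (nxt j u)" "wt (nxt j u) = wt u"
proof -
  have c: "crd k (nxt j u) = crd k u - (if k = j then 1 else 0) + real (l k) / real (l 0)" if "k \<in> {1..m}" for k
    unfolding nxt_def using that j by (simp add: crd_add crd_diff crd_a crd_a0)
  have pos: "0 < crd k (nxt j u)" if k: "k \<in> {1..m}" for k
  proof -
    have "0 < real (l k) / real (l 0)" using lpos k l0pos by auto
    moreover have "0 \<le> crd k u - (if k = j then 1 else 0)"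
    proof -
      have "0 < crd k u" using u(2) k unfolding intr_def by blast
      then show ?thesis using j(2) by simp
    qed
    ultimately show ?thesis using c[OF k] by linarith
  qed
  have "nxt j u \<in> Ck" unfolding nxt_def
    using u(1) j(1) unfolding Mk_iff by (intro Ck_add Ck_diff zap_a) auto
  then show "nxt j u \<in> Mk" using pos unfolding Mk_iff by (auto intro: less_imp_le)
  show "intr (nxt j u)" using pos unfolding intr_def by blast
  show "wt (nxt j u) = wt u" unfolding nxt_def using j by (simp add: wt_add wt_diff wt_a wt_a0)
qed

lemma step:
  assumes u: "u \<in> Mk" "intr u" and j: "j \<in> {1..m}" "1 \<le> crd j u"
    and IH: "\<And>v. v \<in> Mk \<Longrightarrow> intr v \<Longrightarrow> wt v < wt u \<Longrightarrow> xmon v \<in> Gset"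
  shows "(\<lambda>x. xmon u x - lam * xmon (nxt j u) x) \<in> Gset"
proof -
  define v where "v = u - a j"
  have crdv: "crd k v = crd k u - (if k = j then 1 else 0)" if "k \<in> {1..m}" for k
    unfolding v_def using that j by (simp add: crd_diff crd_a)
  have vCk: "v \<in> Ck" unfolding v_def using u(1) j(1) unfolding Mk_iff by (intro Ck_diff zap_a) auto
  have vnn: "0 \<le> crd k v" if "k \<in> {1..m}" for k
  proof -
    have "0 < crd k u" using u(2) that unfolding intr_def by blast
    then show ?thesis using crdv[OF that] j(2) by simp
  qed
  have vMk: "v \<in> Mk" using vCk vnn unfolding Mk_iff by blast
  define c where "c = crd j v"
  define L where "L = l j"
  have Lpos: "0 < L" using lpos j unfolding L_def by auto
  define D where "D = (\<lambda>x. kc (crd j x) * xmon v x + of_nat (l j) * xmon v (x - a j) - of_nat (l j) * lam * xmon v (x - a 0))"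
  have DD: "D \<in> DI" unfolding D_def by (rule Dj_DI[OF j(1) Sk_xmon[OF vMk]])
  have t1: "(\<lambda>x. kc (1 / real L) * D x) \<in> Gset" using G_DI DI_scale DD by blast
  have t2: "(\<lambda>x. kc (- (c / real L)) * xmon v x) \<in> Gset"
  proof (cases "c = 0")
    case True
    show ?thesis by (rule G_cong[OF G_zero]) (simp add: kc_0 True)
  next
    case False
    then have "0 < c" using vnn[OF j(1)] unfolding c_def by simp
    then have "intr v" unfolding intr_def
      using crdv u(2) c_def unfolding intr_def by auto
    moreover have "wt v < wt u" unfolding v_def using j by (simp add: wt_diff wt_a)
    ultimately have "xmon v \<in> Gset" using IH vMk by blast
    then show ?thesis by (rule G_scale)
  qed
  have "(\<lambda>x. kc (1 / real L) * D x + kc (- (c / real L)) * xmon v x) \<in> Gset"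
    using G_add[OF t1 t2] .
  then show ?thesis
  proof (rule G_cong)
    fix x
    have x1: "xmon v (x - a j) = xmon u x" unfolding xmon_def v_def by auto
    have x2: "xmon v (x - a 0) = xmon (nxt j u) x" unfolding xmon_def v_def nxt_def
      by (auto simp: algebra_simps)
    have x3: "kc (crd j x) * xmon v x = kc c * xmon v x" unfolding xmon_def c_def by simp
    have e1: "kc (1 / real L) * kc c = kc (c / real L)" by (simp add: kc_mult[symmetric])
    have e2: "kc (1 / real L) * of_nat L = 1" using kc_inv[of "real L"] Lpos kc_of_nat[of L] by simp
    have "kc (1 / real L) * D x = (kc (1 / real L) * kc c) * xmon v x + (kc (1 / real L) * of_nat L) * xmon u x
         - (kc (1 / real L) * of_nat L) * lam * xmon (nxt j u) x"
      unfolding D_def x1 x2 x3 L_def by (simp add: algebra_simps)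
    also have "\<dots> = kc (c / real L) * xmon v x + xmon u x - lam * xmon (nxt j u) x"
      unfolding e1 e2 by simp
    finally show "kc (1 / real L) * D x + kc (- (c / real L)) * xmon v x = xmon u x - lam * xmon (nxt j u) x"
      by (simp add: kc_uminus)
  qed
qed

end

context P91 begin

lemma not_Bint_big:
  assumes u: "u \<in> Mk" "intr u" "u \<notin> Bint"
  shows "\<exists>j\<in>{1..m}. 1 \<le> crd j u"
proof (rule ccontr)
  assume "\<not> (\<exists>j\<in>{1..m}. 1 \<le> crd j u)"
  then have lt: "\<forall>j\<in>{1..m}. crd j u < 1" by (simp add: not_le)
  have "u \<in> Ck" using u(1) unfolding Mk_iff by blast
  moreover have "\<forall>j\<in>{1..m}. 0 < crd j u \<and> crd j u < 1" using lt u(2) unfolding intr_def by blast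
  ultimately have "u \<in> Bint" unfolding Bint_iff by blast
  then show False using u(3) by blast
qed

lemma level:
  assumes IH: "\<And>v. v \<in> Mk \<Longrightarrow> intr v \<Longrightarrow> wt v < W \<Longrightarrow> xmon v \<in> Gset"
    and u0: "u0 \<in> Mk" "intr u0" "wt u0 = W"
  shows "xmon u0 \<in> Gset"
proof (rule ccontr)
  assume nG: "xmon u0 \<notin> Gset"
  define N where "N = {u \<in> Mk. intr u \<and> wt u = W \<and> xmon u \<notin> Gset}"
  have "N \<subseteq> {u \<in> Mk. wt u \<le> W}" unfolding N_def by auto
  then have finN: "finite N" using finite_Mk_wt finite_subset by blast
  define js where "js u = (SOME j. j \<in> {1..m} \<and> 1 \<le> crd j u)" for u
  define f where "f u = nxt (js u) u" for u
  have jsN: "js u \<in> {1..m} \<and> 1 \<le> crd (js u) u" if uN: "u \<in> N" for u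
  proof -
    have "u \<notin> Bint" using uN G_b unfolding N_def by blast
    then have "\<exists>j. j \<in> {1..m} \<and> 1 \<le> crd j u" using not_Bint_big uN unfolding N_def by blast
    then show ?thesis unfolding js_def by (rule someI_ex)
  qed
  have uprops: "u \<in> Mk" "intr u" "wt u = W" "xmon u \<notin> Gset" if "u \<in> N" for u
    using that unfolding N_def by auto
  have stepN: "(\<lambda>x. xmon u x - lam * xmon (f u) x) \<in> Gset" if uN: "u \<in> N" for u
    unfolding f_def
  proof (rule step)
    show "u \<in> Mk" "intr u" using uprops[OF uN] by auto
    show "js u \<in> {1..m}" "1 \<le> crd (js u) u" using jsN[OF uN] by auto
    fix v assume "v \<in> Mk" "intr v" "wt v < wt u"
    then show "xmon v \<in> Gset" using IH uprops(3)[OF uN] by simp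
  qed
  have fN: "f u \<in> N" if uN: "u \<in> N" for u
  proof -
    have p: "f u \<in> Mk" "intr (f u)" "wt (f u) = wt u"
      unfolding f_def using nxt_props[of u "js u"] uprops[OF uN] jsN[OF uN] by auto
    have "xmon (f u) \<notin> Gset"
    proof
      assume "xmon (f u) \<in> Gset"
      then have "(\<lambda>x. lam * xmon (f u) x) \<in> Gset" by (rule G_scale)
      then have "(\<lambda>x. (xmon u x - lam * xmon (f u) x) + lam * xmon (f u) x) \<in> Gset"
        using G_add[OF stepN[OF uN]] by blast
      then have "xmon u \<in> Gset" by (rule G_cong) simp
      then show False using uprops(4)[OF uN] by blast
    qed
    then show ?thesis using p uprops[OF uN] unfolding N_def by auto
  qed
  define s where "s t = (f ^^ t) u0" for t
  have sSuc: "s (Suc t) = f (s t)" for t unfolding s_def by simp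
  have sN: "s t \<in> N" for t
  proof (induction t)
    case 0 then show ?case unfolding s_def N_def using u0 nG by simp
  next
    case (Suc t) then show ?case unfolding sSuc by (rule fN)
  qed
  have chain: "(\<lambda>x. xmon (s p) x - lam ^ r * xmon (s (p + r)) x) \<in> Gset" for p r
  proof (induction r)
    case 0 show ?case by (rule G_cong[OF G_zero]) simp
  next
    case (Suc r)
    have "(\<lambda>x. lam ^ r * (xmon (s (p + r)) x - lam * xmon (f (s (p + r))) x)) \<in> Gset"
      using stepN[OF sN] by (rule G_scale)
    then have "(\<lambda>x. (xmon (s p) x - lam ^ r * xmon (s (p + r)) x)
        + lam ^ r * (xmon (s (p + r)) x - lam * xmon (f (s (p + r))) x)) \<in> Gset"
      using G_add[OF Suc.IH] by blast
    then show ?case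
    proof (rule G_cong)
      fix x
      show "(xmon (s p) x - lam ^ r * xmon (s (p + r)) x)
        + lam ^ r * (xmon (s (p + r)) x - lam * xmon (f (s (p + r))) x)
        = xmon (s p) x - lam ^ Suc r * xmon (s (p + Suc r)) x"
        by (simp add: sSuc algebra_simps)
    qed
  qed
  have "\<not> inj s"
  proof
    assume "inj s"
    moreover have "finite (range s)" using sN finN by (meson finite_subset image_subsetI)
    ultimately have "finite (UNIV :: nat set)" using finite_imageD by blast
    then show False by simp
  qed
  then obtain p q where pq: "p \<noteq> q" "s p = s q" unfolding inj_def by blast
  obtain p' r where pr: "r > 0" "s p' = s (p' + r)"
  proof (cases "p < q")
    case True
    then show ?thesis using that[of "q - p" p] pq by simp
  next
    case False
    then have "q < p" using pq(1) by simp
    then show ?thesis using that[of "p - q" q] pq by simp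
  qed
  have "(\<lambda>x. xmon (s p') x - lam ^ r * xmon (s p') x) \<in> Gset" using chain[of p' r] pr(2) by simp
  then have "(\<lambda>x. inverse (1 - lam ^ r) * (xmon (s p') x - lam ^ r * xmon (s p') x)) \<in> Gset"
    by (rule G_scale)
  then have "xmon (s p') \<in> Gset"
  proof (rule G_cong)
    fix x
    have ne: "1 - lam ^ r \<noteq> 0" using lam_pow_ne1 pr(1) by blast
    have "xmon (s p') x - lam ^ r * xmon (s p') x = (1 - lam ^ r) * xmon (s p') x" by (simp add: algebra_simps)
    then show "inverse (1 - lam ^ r) * (xmon (s p') x - lam ^ r * xmon (s p') x) = xmon (s p') x"
      using ne by simp
  qed
  then show False using uprops(4)[OF sN[of p']] by blast
qed

lemma span_all: "u \<in> Mk \<Longrightarrow> intr u \<Longrightarrow> xmon u \<in> Gset"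
proof (induction u rule: measure_induct_rule[where f="\<lambda>u. card {v \<in> Mk. wt v < wt u}"])
  case (less u)
  show ?case
  proof (rule level[where W = "wt u"])
    fix v assume v: "v \<in> Mk" "intr v" "wt v < wt u"
    have fin: "finite {x \<in> Mk. wt x < wt u}"
      using finite_Mk_wt[of "wt u"] by (rule finite_subset[rotated]) auto
    have "{x \<in> Mk. wt x < wt v} \<subset> {x \<in> Mk. wt x < wt u}"
      using v by auto
    then have "card {x \<in> Mk. wt x < wt v} < card {x \<in> Mk. wt x < wt u}"
      using fin by (rule psubset_card_mono[rotated])
    then show "xmon v \<in> Gset" using less.IH v by blast
  next
    show "u \<in> Mk" "intr u" "wt u = wt u" using less.prems by auto
  qed
qed

end

lemma clear_denoms:
  fixes S :: "K set"
  assumes "finite S"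
  shows "\<exists>Q::complex poly. Q \<noteq> 0 \<and> (\<forall>x\<in>S. \<exists>p. to_fract Q * x = to_fract p)"
  using assms
proof (induction S rule: finite_induct)
  case empty
  show ?case by (intro exI[of _ 1] conjI ballI) simp_all
next
  case (insert x S)
  then obtain Q where Q: "Q \<noteq> 0" "\<forall>y\<in>S. \<exists>p. to_fract Q * y = to_fract p" by blast
  obtain p q where x: "x = Fract p q" "q \<noteq> 0" by (rule Fract_cases[of x])
  have nz: "Q * q \<noteq> 0" using Q(1) x(2) by simp
  have "Fract (q * (Q * p)) (q * 1) = Fract (Q * p) 1" by (rule mult_fract_cancel[OF x(2)])
  then have ex1: "to_fract (Q * q) * x = to_fract (Q * p)"
    unfolding x(1) to_fract_def mult_fract by (simp add: ac_simps)
  have ex2: "\<exists>r. to_fract (Q * q) * y = to_fract r" if ys: "y \<in> S" for y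
  proof -
    obtain r where r: "to_fract Q * y = to_fract r" using Q(2) ys by blast
    have "to_fract (Q * q) * y = to_fract q * (to_fract Q * y)" by simp
    also have "\<dots> = to_fract (q * r)" unfolding r by simp
    finally show ?thesis by (rule exI)
  qed
  have all: "\<forall>y\<in>insert x S. \<exists>p. to_fract (Q * q) * y = to_fract p"
  proof
    fix y assume "y \<in> insert x S"
    then show "\<exists>p. to_fract (Q * q) * y = to_fract p"
    proof
      assume "y = x" then show ?thesis using ex1 by (intro exI[of _ "Q * p"]) simp
    next
      assume "y \<in> S" then show ?thesis by (rule ex2)
    qed
  qed
  show ?case using nz all by blast
qed

lemma tf_const: "to_fract [:complex_of_int n:] = (of_int n :: K)"
proof -
  have "to_fract [:complex_of_int n:] = kc (real_of_int n)" unfolding kc_def by simp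
  then show ?thesis by (simp add: kc_of_int)
qed

lemma lam_tf: "lam = to_fract [:0, 1:]" unfolding lam_def to_fract_def ..

context P91 begin

definition DopP :: "'n \<Rightarrow> (int ^ 'n \<Rightarrow> complex poly) \<Rightarrow> int ^ 'n \<Rightarrow> complex poly" where
  "DopP i g v = [:of_int (v $ i):] * g v
      + (\<Sum>j=1..m. [:of_int (int (l j) * a j $ i):] * g (v - a j))
      - [:of_int (int (l 0) * a 0 $ i):] * [:0, 1:] * g (v - a 0)"

lemma Dop_tf: "Dop a l m i (\<lambda>v. to_fract (g v)) v = to_fract (DopP i g v)"
  unfolding Dop_def DopP_def by (simp only: to_fract_add to_fract_diff to_fract_mult to_fract_sum tf_const lam_tf)

lemma indep_poly:
  assumes hD: "h \<in> DI" and h: "\<And>v. h v = (if v \<in> Bint then C v else 0)"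
  shows "\<exists>Q Cp Gp. Q \<noteq> 0 \<and> (\<forall>b\<in>Bint. to_fract (Cp b) = to_fract Q * C b)
     \<and> (\<forall>i. finite {v. Gp i v \<noteq> 0} \<and> {v. Gp i v \<noteq> 0} \<subseteq> Mk)
     \<and> (\<forall>v. (if v \<in> Bint then Cp v else 0) = (\<Sum>i\<in>UNIV. DopP i (Gp i) v))"
proof -
  obtain G where G: "\<forall>i. G i \<in> Sk Mk" "h = (\<lambda>v. \<Sum>i\<in>UNIV. Dop a l m i (G i) v)"
    using hD unfolding DImg_def by blast
  define S where "S = C ` Bint \<union> (\<Union>i. G i ` {v. G i v \<noteq> 0})"
  have "finite S" unfolding S_def using finite_Bint G(1) unfolding Sk_def by auto
  then obtain Q where Q: "Q \<noteq> 0" "\<forall>x\<in>S. \<exists>p. to_fract Q * x = to_fract p"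
    using clear_denoms by blast
  define Gp where "Gp i v = (SOME p. to_fract Q * G i v = to_fract p)" for i v
  define Cp where "Cp b = (SOME p. to_fract Q * C b = to_fract p)" for b
  have exG: "\<exists>p. to_fract Q * G i v = to_fract p" for i v
  proof (cases "G i v = 0")
    case True then show ?thesis by (intro exI[of _ 0]) simp
  next
    case False then have "G i v \<in> S" unfolding S_def by blast
    then show ?thesis using Q(2) by blast
  qed
  have Gp: "to_fract (Gp i v) = to_fract Q * G i v" for i v
    unfolding Gp_def by (rule someI_ex[OF exG[of i v], THEN sym])
  have Cp: "to_fract (Cp b) = to_fract Q * C b" if "b \<in> Bint" for b
  proof -
    have "C b \<in> S" unfolding S_def using that by blast
    then have "\<exists>p. to_fract Q * C b = to_fract p" using Q(2) by blast
    from someI_ex[OF this] show ?thesis unfolding Cp_def by (rule sym)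
  qed
  have supp: "{v. Gp i v \<noteq> 0} \<subseteq> {v. G i v \<noteq> 0}" for i
  proof
    fix v assume "v \<in> {v. Gp i v \<noteq> 0}"
    then have "to_fract (Gp i v) \<noteq> 0" by simp
    then show "v \<in> {v. G i v \<noteq> 0}" unfolding Gp by auto
  qed
  have fin: "finite {v. Gp i v \<noteq> 0} \<and> {v. Gp i v \<noteq> 0} \<subseteq> Mk" for i
  proof -
    have "G i \<in> Sk Mk" using G(1) by blast
    then have g: "finite {v. G i v \<noteq> 0}" "{v. G i v \<noteq> 0} \<subseteq> Mk" unfolding Sk_def by auto
    show ?thesis using finite_subset[OF supp[of i] g(1)] subset_trans[OF supp[of i] g(2)] by (rule conjI)
  qed
  have eq: "(if v \<in> Bint then Cp v else 0) = (\<Sum>i\<in>UNIV. DopP i (Gp i) v)" for v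
  proof -
    have "to_fract (if v \<in> Bint then Cp v else 0) = to_fract Q * h v"
      unfolding h using Cp by simp
    also have "\<dots> = (\<Sum>i\<in>UNIV. Dop a l m i (\<lambda>v. to_fract Q * G i v) v)"
      unfolding G(2) by (simp add: Dop_scale sum_distrib_left)
    also have "\<dots> = (\<Sum>i\<in>UNIV. Dop a l m i (\<lambda>v. to_fract (Gp i v)) v)"
      unfolding Gp ..
    also have "\<dots> = to_fract (\<Sum>i\<in>UNIV. DopP i (Gp i) v)"
      unfolding Dop_tf by simp
    finally show ?thesis by (simp only: to_fract_eq_iff)
  qed
  show ?thesis
    by (intro exI[of _ Q] exI[of _ Cp] exI[of _ Gp] conjI allI ballI Q(1) Cp fin[THEN conjunct1] fin[THEN conjunct2] eq)
qed

end

lemma prod_upd: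
  assumes "finite S" "j \<in> S" "\<And>k. k \<in> S \<Longrightarrow> k \<noteq> j \<Longrightarrow> f' k = f k" "f' j = c * f j"
  shows "prod f' S = c * prod f S"
proof -
  have "prod f' S = f' j * prod f' (S - {j})" using assms(1,2) by (rule prod.remove)
  also have "prod f' (S - {j}) = prod f (S - {j})" using assms(3) by (intro prod.cong) auto
  also have "f' j * prod f (S - {j}) = c * (f j * prod f (S - {j}))" using assms(4) by (simp add: mult.assoc)
  also have "f j * prod f (S - {j}) = prod f S" using assms(1,2) by (rule prod.remove[symmetric])
  finally show ?thesis .
qed

context P91 begin

definition inl :: "int ^ 'n \<Rightarrow> int ^ 'n \<Rightarrow> bool" where
  "inl e x \<longleftrightarrow> (\<forall>j\<in>{1..m}. \<exists>n::nat. crd j x = crd j e + real n)"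
definition nn :: "int ^ 'n \<Rightarrow> int ^ 'n \<Rightarrow> nat \<Rightarrow> nat" where
  "nn e x j = nat \<lfloor>crd j x - crd j e\<rfloor>"
definition Pf :: "int ^ 'n \<Rightarrow> int ^ 'n \<Rightarrow> real" where
  "Pf e x = (if inl e x then (\<Prod>j=1..m. (- 1 / real (l j)) ^ nn e x j * pochhammer (crd j e) (nn e x j)) else 0)"

lemma nn_eq: "crd j x = crd j e + real n \<Longrightarrow> nn e x j = n"
  unfolding nn_def by simp

lemma crd_aj: "k \<in> {1..m} \<Longrightarrow> j \<in> {1..m} \<Longrightarrow> crd k (x + a j) = crd k x + (if k = j then 1 else 0)"
  by (simp add: crd_add crd_a)

lemma Pf_rec:
  assumes e: "e \<in> Bint" and j: "j \<in> {1..m}" and x: "0 \<le> crd j x"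
  shows "real (l j) * Pf e (x + a j) = - crd j x * Pf e x"
proof (cases "inl e x")
  case True
  then obtain n where n: "\<And>k. k \<in> {1..m} \<Longrightarrow> crd k x = crd k e + real (n k)"
    unfolding inl_def by metis
  have n1: "crd k (x + a j) = crd k e + real (n k + (if k = j then 1 else 0))" if "k \<in> {1..m}" for k
    using crd_aj[OF that j, of x] n[OF that] by simp
  have inl1: "inl e (x + a j)" unfolding inl_def using n1 by blast
  have nn0: "nn e x k = n k" if "k \<in> {1..m}" for k using nn_eq[OF n[OF that]] .
  have nn1: "nn e (x + a j) k = n k + (if k = j then 1 else 0)" if "k \<in> {1..m}" for k
    using nn_eq[OF n1[OF that]] .
  have lpj: "0 < real (l j)" using lpos j by auto
  have "Pf e (x + a j) = (\<Prod>k=1..m. (- 1 / real (l k)) ^ nn e (x + a j) k * pochhammer (crd k e) (nn e (x + a j) k))"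
    unfolding Pf_def using inl1 by simp
  also have "\<dots> = (- 1 / real (l j) * crd j x) * (\<Prod>k=1..m. (- 1 / real (l k)) ^ nn e x k * pochhammer (crd k e) (nn e x k))"
  proof (rule prod_upd)
    show "finite {1..m}" by simp
    show "j \<in> {1..m}" by (rule j)
    fix k assume "k \<in> {1..m}" "k \<noteq> j"
    then show "(- 1 / real (l k)) ^ nn e (x + a j) k * pochhammer (crd k e) (nn e (x + a j) k)
      = (- 1 / real (l k)) ^ nn e x k * pochhammer (crd k e) (nn e x k)"
      using nn0 nn1 by simp
  next
    have "(- 1 / real (l j)) ^ nn e (x + a j) j * pochhammer (crd j e) (nn e (x + a j) j)
       = (- 1 / real (l j)) ^ Suc (n j) * pochhammer (crd j e) (Suc (n j))"
      using nn1[OF j] by simp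
    also have "\<dots> = (- 1 / real (l j) * (crd j e + real (n j))) * ((- 1 / real (l j)) ^ n j * pochhammer (crd j e) (n j))"
      by (simp add: pochhammer_Suc algebra_simps)
    also have "\<dots> = (- 1 / real (l j) * crd j x) * ((- 1 / real (l j)) ^ nn e x j * pochhammer (crd j e) (nn e x j))"
      using n[OF j] nn0[OF j] by simp
    finally show "(- 1 / real (l j)) ^ nn e (x + a j) j * pochhammer (crd j e) (nn e (x + a j) j)
       = (- 1 / real (l j) * crd j x) * ((- 1 / real (l j)) ^ nn e x j * pochhammer (crd j e) (nn e x j))" .
  qed
  also have "\<dots> = (- 1 / real (l j) * crd j x) * Pf e x" unfolding Pf_def using True by simp
  finally show ?thesis using lpj by (simp add: field_simps)
next
  case False
  have "\<not> inl e (x + a j)"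
  proof
    assume "inl e (x + a j)"
    then obtain n where n: "\<And>k. k \<in> {1..m} \<Longrightarrow> crd k (x + a j) = crd k e + real (n k)"
      unfolding inl_def by metis
    have ej: "crd j e < 1" using e j unfolding Bint_iff by blast
    have "n j \<noteq> 0"
    proof
      assume "n j = 0"
      then have "crd j x = crd j e - 1" using n[OF j] crd_aj[OF j j, of x] by simp
      then show False using x ej by simp
    qed
    have "\<exists>n'::nat. crd k x = crd k e + real n'" if k: "k \<in> {1..m}" for k
    proof (cases "k = j")
      case True
      then have "crd k x = crd k e + real (n j - 1)"
        using n[OF j] crd_aj[OF j j, of x] \<open>n j \<noteq> 0\<close> by (simp add: of_nat_diff)
      then show ?thesis by blast
    next
      case False
      then have "crd k x = crd k e + real (n k)" using n[OF k] crd_aj[OF k j, of x] by simp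
      then show ?thesis by blast
    qed
    then have "inl e x" unfolding inl_def by blast
    then show False using False by blast
  qed
  then show ?thesis unfolding Pf_def using False by simp
qed

lemma Bint_eq:
  assumes "b \<in> Bint" "e \<in> Bint" "\<forall>j\<in>{1..m}. crd j b = crd j e"
  shows "b = e"
proof -
  have "b \<in> VZ a m" "e \<in> VZ a m" using assms(1,2) Bint_Mk Mk_iff Ck_VZ by blast+
  then have "rv b = rv e" using crd_rep assms(3) by (metis (no_types, lifting) sum.cong)
  then show ?thesis by (rule rv_inj)
qed

lemma Pf_base:
  assumes b: "b \<in> Bint" and e: "e \<in> Bint"
  shows "Pf e b = (if b = e then 1 else 0)"
proof (cases "inl e b")
  case True
  then obtain n where n: "\<And>k. k \<in> {1..m} \<Longrightarrow> crd k b = crd k e + real (n k)"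
    unfolding inl_def by metis
  have n0: "n k = 0" if k: "k \<in> {1..m}" for k
  proof -
    have "crd k b < 1" "0 < crd k e" using b e k unfolding Bint_iff by auto
    then show ?thesis using n[OF k] by simp
  qed
  have "\<forall>j\<in>{1..m}. crd j b = crd j e" using n n0 by simp
  then have "b = e" using Bint_eq b e by blast
  moreover have "Pf e e = 1"
  proof -
    have "inl e e" unfolding inl_def by (intro ballI exI[of _ 0]) simp
    moreover have "nn e e k = 0" for k unfolding nn_def by simp
    ultimately show ?thesis unfolding Pf_def by simp
  qed
  ultimately show ?thesis by simp
next
  case False
  moreover have "inl e e" unfolding inl_def by (intro ballI exI[of _ 0]) simp
  ultimately have "b \<noteq> e" by blast
  then show ?thesis unfolding Pf_def using False by simp
qed

end

context P91 begin

definition sh :: "nat \<Rightarrow> int ^ 'n \<Rightarrow> int ^ 'n" where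
  "sh k u = u + (\<chi> i. int k * a 0 $ i)"

lemma crd_sh: "crd j (sh k u) = crd j u + real k * crd j (a 0)"
proof -
  have "rv (\<chi> i. int k * a 0 $ i) = real k *\<^sub>R rv (a 0)" by (simp add: rv_def vec_eq_iff)
  then show ?thesis unfolding sh_def crd_add by (simp add: crd_def)
qed

lemma sh_add: "sh k (u + a j) = sh k u + a j"
  unfolding sh_def by (simp add: algebra_simps)

lemma sh_Suc: "sh k (u + a 0) = sh (Suc k) u"
  unfolding sh_def by (simp add: vec_eq_iff algebra_simps)

lemma sh_0: "sh 0 u = u" unfolding sh_def by (simp add: vec_eq_iff)

primrec ck :: "nat \<Rightarrow> real" where
  "ck 0 = 1"
| "ck (Suc k) = - real (l 0) * ck k / real (Suc k)"

lemma ck_0: "ck 0 = 1" by simp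

lemma ck_rel: "ck (Suc k) * real (Suc k) / real (l 0) = - ck k"
proof -
  have l0: "real (l 0) \<noteq> 0" using l0pos by simp
  have "ck (Suc k) * real (Suc k) = - real (l 0) * ck k" by simp
  then show ?thesis using l0 by simp
qed

definition Phi :: "int ^ 'n \<Rightarrow> int ^ 'n \<Rightarrow> complex fps" where
  "Phi e u = Abs_fps (\<lambda>k. complex_of_real (ck k * Pf e (sh k u)))"

definition Ej :: "int ^ 'n \<Rightarrow> nat \<Rightarrow> int ^ 'n \<Rightarrow> complex fps" where
  "Ej e j v = fps_const (complex_of_real (crd j v)) * Phi e v + fps_const (of_nat (l j)) * Phi e (v + a j)
     - fps_const (of_nat (l j)) * (fps_X * Phi e (v + a 0))"

lemma Ej_real:
  assumes e: "e \<in> Bint" and j: "j \<in> {1..m}" and v: "v \<in> Mk"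
  shows "crd j v * (ck k * Pf e (sh k v)) + real (l j) * (ck k * Pf e (sh k (v + a j)))
     - real (l j) * (if k = 0 then 0 else ck (k - 1) * Pf e (sh (k - 1) (v + a 0))) = 0"
proof -
  define W where "W = sh k v"
  have cv: "0 \<le> crd j v" using v j unfolding Mk_iff by blast
  have cW: "crd j W = crd j v + real k * (real (l j) / real (l 0))"
    unfolding W_def crd_sh using crd_a0[OF j] by simp
  have "0 \<le> real k * (real (l j) / real (l 0))" by simp
  then have cW0: "0 \<le> crd j W" using cW cv by linarith
  have rec: "real (l j) * Pf e (W + a j) = - crd j W * Pf e W" by (rule Pf_rec[OF e j cW0])
  show ?thesis
  proof (cases k)
    case 0
    have Wv: "W = v" unfolding W_def 0 by (rule sh_0)
    have "real (l j) * (ck k * Pf e (sh k (v + a j))) = ck k * (real (l j) * Pf e (W + a j))"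
      unfolding W_def sh_add by simp
    also have "\<dots> = ck k * (- crd j W * Pf e W)" unfolding rec ..
    also have "\<dots> = - (crd j v * (ck k * Pf e (sh k v)))" using Wv unfolding W_def by simp
    finally show ?thesis using 0 by simp
  next
    case (Suc k')
    have s1: "sh (k - 1) (v + a 0) = W" unfolding W_def Suc by (simp add: sh_Suc)
    have rr: "real (l j) * (ck k * Pf e (W + a j)) = ck k * (real (l j) * Pf e (W + a j))" by simp
    have "crd j v * (ck k * Pf e W) + real (l j) * (ck k * Pf e (W + a j)) - real (l j) * (ck k' * Pf e W)
        = ck k * (crd j v - crd j W) * Pf e W - real (l j) * ck k' * Pf e W"
      unfolding rr rec by (simp add: algebra_simps)
    also have "\<dots> = - real (l j) * Pf e W * (ck (Suc k') * real (Suc k') / real (l 0) + ck k')"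
      unfolding cW Suc using l0pos by (simp del: ck.simps add: field_simps)
    also have "\<dots> = 0" unfolding ck_rel by simp
    finally show ?thesis using Suc s1 unfolding W_def by (simp add: sh_add)
  qed
qed

lemma Ej_zero:
  assumes e: "e \<in> Bint" and j: "j \<in> {1..m}" and v: "v \<in> Mk"
  shows "Ej e j v = 0"
proof (rule fps_ext)
  fix k
  have "fps_nth (Ej e j v) k = complex_of_real (crd j v * (ck k * Pf e (sh k v)) + real (l j) * (ck k * Pf e (sh k (v + a j)))
     - real (l j) * (if k = 0 then 0 else ck (k - 1) * Pf e (sh (k - 1) (v + a 0))))"
    unfolding Ej_def Phi_def by simp
  also have "\<dots> = 0" unfolding Ej_real[OF e j v] by simp
  finally show "fps_nth (Ej e j v) k = fps_nth 0 k" by simp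
qed

definition Psi :: "int ^ 'n \<Rightarrow> 'n \<Rightarrow> int ^ 'n \<Rightarrow> complex fps" where
  "Psi e i v = fps_const (of_int (v $ i)) * Phi e v
     + (\<Sum>j=1..m. fps_const (of_int (int (l j) * a j $ i)) * Phi e (v + a j))
     - fps_const (of_int (int (l 0) * a 0 $ i)) * (fps_X * Phi e (v + a 0))"

lemma comp_rep: "v \<in> VZ a m \<Longrightarrow> real_of_int (v $ i) = (\<Sum>j=1..m. crd j v * real_of_int (a j $ i))"
proof -
  assume v: "v \<in> VZ a m"
  have "real_of_int (v $ i) = rv v $ i" by (simp add: rv_def)
  also have "\<dots> = (\<Sum>j=1..m. crd j v * real_of_int (a j $ i))"
    by (subst crd_rep[OF v]) (simp add: sum_component rv_def)
  finally show ?thesis .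
qed

lemma Psi_zero:
  assumes e: "e \<in> Bint" and v: "v \<in> Mk"
  shows "Psi e i v = 0"
proof -
  have vV: "v \<in> VZ a m" using v Mk_iff Ck_VZ by blast
  have I1: "(of_int (v $ i) :: complex) = (\<Sum>j=1..m. of_int (a j $ i) * complex_of_real (crd j v))"
  proof -
    have "(of_int (v $ i) :: complex) = complex_of_real (real_of_int (v $ i))" by simp
    also have "\<dots> = complex_of_real (\<Sum>j=1..m. crd j v * real_of_int (a j $ i))" unfolding comp_rep[OF vV] ..
    also have "\<dots> = (\<Sum>j=1..m. of_int (a j $ i) * complex_of_real (crd j v))" by (simp add: mult.commute)
    finally show ?thesis .
  qed
  have I3: "(of_int (int (l 0) * a 0 $ i) :: complex) = (\<Sum>j=1..m. of_int (a j $ i) * of_nat (l j))"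
  proof -
    have "int (l 0) * a 0 $ i = (\<Sum>j=1..m. int (l j) * a j $ i)"
      using arg_cong[OF rel, of "\<lambda>v. v $ i"] by simp
    then have "(of_int (int (l 0) * a 0 $ i) :: complex) = of_int (\<Sum>j=1..m. int (l j) * a j $ i)" by simp
    then show ?thesis by (simp add: mult.commute)
  qed
  have "Psi e i v = (\<Sum>j=1..m. fps_const (of_int (a j $ i)) * Ej e j v)"
  proof (rule fps_ext)
    fix k
    define p where "p = fps_nth (Phi e v) k"
    define q where "q j = fps_nth (Phi e (v + a j)) k" for j
    define r where "r = fps_nth (fps_X * Phi e (v + a 0)) k"
    have "fps_nth (Psi e i v) k = of_int (v $ i) * p + (\<Sum>j=1..m. of_int (int (l j) * a j $ i) * q j)
        - of_int (int (l 0) * a 0 $ i) * r"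
      unfolding Psi_def p_def q_def r_def by (simp add: fps_sum_nth del: fps_X_mult_nth)
    also have "\<dots> = (\<Sum>j=1..m. of_int (a j $ i) * complex_of_real (crd j v)) * p
        + (\<Sum>j=1..m. of_int (a j $ i) * of_nat (l j) * q j) - (\<Sum>j=1..m. of_int (a j $ i) * of_nat (l j)) * r"
      unfolding I1 I3 by (simp add: mult.commute)
    also have "\<dots> = (\<Sum>j=1..m. of_int (a j $ i) * (complex_of_real (crd j v) * p + of_nat (l j) * q j - of_nat (l j) * r))"
      by (simp add: algebra_simps sum.distrib sum_subtractf sum_distrib_left sum_distrib_right)
    also have "\<dots> = fps_nth (\<Sum>j=1..m. fps_const (of_int (a j $ i)) * Ej e j v) k"
    proof -
      have nE: "fps_nth (Ej e j v) k = complex_of_real (crd j v) * p + of_nat (l j) * q j - of_nat (l j) * r" for j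
        unfolding Ej_def p_def q_def r_def by (simp del: fps_X_mult_nth)
      show ?thesis by (simp add: fps_sum_nth nE)
    qed
    finally show "fps_nth (Psi e i v) k = fps_nth (\<Sum>j=1..m. fps_const (of_int (a j $ i)) * Ej e j v) k" .
  qed
  also have "\<dots> = 0" using Ej_zero[OF e _ v] by simp
  finally show ?thesis .
qed

end

lemma shift_sum:
  fixes g :: "int ^ 'n \<Rightarrow> 'b::comm_ring" and \<Phi> :: "int ^ 'n \<Rightarrow> 'b"
  assumes F: "finite F" and S: "finite S" and g: "\<And>v. v \<notin> S \<Longrightarrow> g v = 0"
    and sub: "(\<lambda>v. v + t) ` S \<subseteq> F"
  shows "(\<Sum>u\<in>F. g (u - t) * \<Phi> u) = (\<Sum>v\<in>S. g v * \<Phi> (v + t))"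
proof -
  have "(\<Sum>u\<in>F. g (u - t) * \<Phi> u) = (\<Sum>u\<in>(\<lambda>v. v + t) ` S. g (u - t) * \<Phi> u)"
  proof (rule sum.mono_neutral_right[OF F sub])
    show "\<forall>u\<in>F - (\<lambda>v. v + t) ` S. g (u - t) * \<Phi> u = 0"
    proof
      fix u assume "u \<in> F - (\<lambda>v. v + t) ` S"
      then have "u - t \<notin> S" by (metis DiffD2 diff_add_cancel image_eqI)
      then show "g (u - t) * \<Phi> u = 0" using g by simp
    qed
  qed
  also have "\<dots> = (\<Sum>v\<in>S. g (v + t - t) * \<Phi> (v + t))"
    by (rule sum.reindex_cong[where l="\<lambda>v. v + t"]) (auto simp: inj_on_def)
  also have "\<dots> = (\<Sum>v\<in>S. g v * \<Phi> (v + t))" by simp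
  finally show ?thesis .
qed

context P91 begin

lemma fps_DopP: "fps_of_poly (DopP i g u) = fps_const (of_int (u $ i)) * fps_of_poly (g u)
   + (\<Sum>j=1..m. fps_const (of_int (int (l j) * a j $ i)) * fps_of_poly (g (u - a j)))
   - fps_const (of_int (int (l 0) * a 0 $ i)) * fps_X * fps_of_poly (g (u - a 0))"
  unfolding DopP_def by (simp only: fps_of_poly_add fps_of_poly_diff fps_of_poly_mult fps_of_poly_sum fps_of_poly_const fps_of_poly_fps_X)

lemma pair_DopP:
  assumes e: "e \<in> Bint" and S: "finite S" "S \<subseteq> Mk" and g: "\<And>v. v \<notin> S \<Longrightarrow> g v = 0"
    and F: "finite F" and sub: "\<And>t. t \<in> insert 0 (a ` {0..m}) \<Longrightarrow> (\<lambda>v. v + t) ` S \<subseteq> F"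
  shows "(\<Sum>u\<in>F. fps_of_poly (DopP i g u) * Phi e u) = 0"
proof -
  define fg where "fg v = fps_of_poly (g v)" for v
  have fg0: "fg v = 0" if "v \<notin> S" for v unfolding fg_def using g[OF that] by simp
  have sub0: "(\<lambda>v. v + 0) ` S \<subseteq> F" using sub[of 0] by simp
  have subj: "(\<lambda>v. v + a j) ` S \<subseteq> F" if "j \<le> m" for j using sub[of "a j"] that by simp
  have T1: "(\<Sum>u\<in>F. fg u * (fps_const (of_int (u $ i)) * Phi e u)) = (\<Sum>v\<in>S. fg v * (fps_const (of_int (v $ i)) * Phi e v))"
    using shift_sum[OF F S(1) fg0 sub0, where \<Phi>="\<lambda>u. fps_const (of_int (u $ i)) * Phi e u"] by simp
  have T2: "(\<Sum>u\<in>F. fg (u - a j) * Phi e u) = (\<Sum>v\<in>S. fg v * Phi e (v + a j))" if "j \<le> m" for j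
    using shift_sum[OF F S(1) fg0 subj[OF that]] .
  have "(\<Sum>u\<in>F. fps_of_poly (DopP i g u) * Phi e u)
      = (\<Sum>u\<in>F. fg u * (fps_const (of_int (u $ i)) * Phi e u))
        + (\<Sum>j=1..m. fps_const (of_int (int (l j) * a j $ i)) * (\<Sum>u\<in>F. fg (u - a j) * Phi e u))
        - fps_const (of_int (int (l 0) * a 0 $ i)) * fps_X * (\<Sum>u\<in>F. fg (u - a 0) * Phi e u)"
    unfolding fps_DopP fg_def[symmetric]
    by (simp add: algebra_simps sum.distrib sum_subtractf sum_distrib_left sum_distrib_right sum.swap[of _ F])
  also have "\<dots> = (\<Sum>v\<in>S. fg v * (fps_const (of_int (v $ i)) * Phi e v))
        + (\<Sum>j=1..m. fps_const (of_int (int (l j) * a j $ i)) * (\<Sum>v\<in>S. fg v * Phi e (v + a j)))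
        - fps_const (of_int (int (l 0) * a 0 $ i)) * fps_X * (\<Sum>v\<in>S. fg v * Phi e (v + a 0))"
    using T1 T2 by simp
  also have "\<dots> = (\<Sum>v\<in>S. fg v * Psi e i v)"
    unfolding Psi_def
    by (simp add: algebra_simps sum.distrib sum_subtractf sum_distrib_left sum_distrib_right sum.swap[of _ S])
  also have "\<dots> = 0" using Psi_zero[OF e] S(2) by (intro sum.neutral) auto
  finally show ?thesis .
qed

end

context P91 begin

lemma Phi_0: "fps_nth (Phi e b) 0 = complex_of_real (Pf e b)"
  unfolding Phi_def by (simp add: sh_0)

lemma indep_main:
  assumes hD: "(\<lambda>v. \<Sum>b\<in>Bint. C b * xmon b v) \<in> DI"
  shows "\<forall>b\<in>Bint. C b = 0"
proof -
  have hv: "(\<Sum>b\<in>Bint. C b * xmon b v) = (if v \<in> Bint then C v else 0)" for v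
  proof -
    have "(\<Sum>b\<in>Bint. C b * xmon b v) = (\<Sum>b\<in>Bint. if v = b then C b else 0)"
      unfolding xmon_def by (intro sum.cong) auto
    also have "\<dots> = (if v \<in> Bint then C v else 0)" using finite_Bint by (simp add: sum.delta)
    finally show ?thesis .
  qed
  obtain Q Cp Gp where Q: "Q \<noteq> 0" and Cp: "\<forall>b\<in>Bint. to_fract (Cp b) = to_fract Q * C b"
    and Gp: "\<forall>i. finite {v. Gp i v \<noteq> 0} \<and> {v. Gp i v \<noteq> 0} \<subseteq> Mk"
    and eq: "\<forall>v. (if v \<in> Bint then Cp v else 0) = (\<Sum>i\<in>UNIV. DopP i (Gp i) v)"
    using indep_poly[OF hD hv] by blast
  define T where "T = insert 0 (a ` {0..m})"
  define F where "F = Bint \<union> (\<Union>i. \<Union>t\<in>T. (\<lambda>v. v + t) ` {v. Gp i v \<noteq> 0})"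
  have finF: "finite F" unfolding F_def T_def using finite_Bint Gp by auto
  have key: "(\<Sum>b\<in>Bint. fps_of_poly (Cp b) * Phi e b) = 0" if e: "e \<in> Bint" for e
  proof -
    have "(\<Sum>b\<in>Bint. fps_of_poly (Cp b) * Phi e b) = (\<Sum>u\<in>F \<inter> Bint. fps_of_poly (Cp u) * Phi e u)"
    proof -
      have "F \<inter> Bint = Bint" unfolding F_def by blast
      then show ?thesis by simp
    qed
    also have "\<dots> = (\<Sum>u\<in>F. if u \<in> Bint then fps_of_poly (Cp u) * Phi e u else 0)"
      using finF by (rule sum.inter_restrict)
    also have "\<dots> = (\<Sum>u\<in>F. fps_of_poly (if u \<in> Bint then Cp u else 0) * Phi e u)"
      by (intro sum.cong) auto
    also have "\<dots> = (\<Sum>u\<in>F. fps_of_poly (\<Sum>i\<in>UNIV. DopP i (Gp i) u) * Phi e u)"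
      using eq by simp
    also have "\<dots> = (\<Sum>i\<in>UNIV. \<Sum>u\<in>F. fps_of_poly (DopP i (Gp i) u) * Phi e u)"
      by (simp add: fps_of_poly_sum sum_distrib_right sum.swap[of _ F])
    also have "\<dots> = 0"
    proof (rule sum.neutral, rule ballI)
      fix i :: 'n
      show "(\<Sum>u\<in>F. fps_of_poly (DopP i (Gp i) u) * Phi e u) = 0"
      proof (rule pair_DopP[OF e])
        show "finite {v. Gp i v \<noteq> 0}" "{v. Gp i v \<noteq> 0} \<subseteq> Mk" using Gp by auto
        show "\<And>v. v \<notin> {v. Gp i v \<noteq> 0} \<Longrightarrow> Gp i v = 0" by simp
        show "finite F" by (rule finF)
        fix t assume "t \<in> insert 0 (a ` {0..m})"
        then show "(\<lambda>v. v + t) ` {v. Gp i v \<noteq> 0} \<subseteq> F" unfolding F_def T_def by blast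
      qed
    qed
    finally show ?thesis .
  qed
  have Cp0: "\<forall>b\<in>Bint. Cp b = 0"
  proof (rule ccontr)
    assume "\<not> (\<forall>b\<in>Bint. Cp b = 0)"
    then obtain b0 where b0: "b0 \<in> Bint" "Cp b0 \<noteq> 0" by blast
    define P where "P n \<longleftrightarrow> (\<exists>b\<in>Bint. coeff (Cp b) n \<noteq> 0)" for n
    have "P (degree (Cp b0))" unfolding P_def using b0 leading_coeff_neq_0 by blast
    then have Pd: "P (Least P)" by (rule LeastI)
    define d where "d = Least P"
    obtain b1 where b1: "b1 \<in> Bint" "coeff (Cp b1) d \<noteq> 0" using Pd unfolding P_def d_def by blast
    have low: "coeff (Cp b) n = 0" if "b \<in> Bint" "n < d" for b n
    proof -
      have "\<not> P n" using not_less_Least[of n P] that(2) unfolding d_def .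
      then show ?thesis using that(1) unfolding P_def by blast
    qed
    have inner: "fps_nth (fps_of_poly (Cp b) * Phi b1 b) d = coeff (Cp b) d * (if b = b1 then 1 else 0)"
      if b: "b \<in> Bint" for b
    proof -
      have "fps_nth (fps_of_poly (Cp b) * Phi b1 b) d = (\<Sum>i=0..d. coeff (Cp b) i * fps_nth (Phi b1 b) (d - i))"
        by (simp add: fps_mult_nth)
      also have "\<dots> = coeff (Cp b) d * fps_nth (Phi b1 b) (d - d)"
      proof -
        have "{0..d} = insert d {0..<d}" by auto
        moreover have "(\<Sum>i\<in>{0..<d}. coeff (Cp b) i * fps_nth (Phi b1 b) (d - i)) = 0"
          using low[OF b] by (intro sum.neutral) auto
        ultimately show ?thesis by simp
      qed
      also have "\<dots> = coeff (Cp b) d * complex_of_real (Pf b1 b)" using Phi_0 by simp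
      also have "\<dots> = coeff (Cp b) d * (if b = b1 then 1 else 0)" using Pf_base[OF b b1(1)] by simp
      finally show ?thesis .
    qed
    have "fps_nth (\<Sum>b\<in>Bint. fps_of_poly (Cp b) * Phi b1 b) d = (\<Sum>b\<in>Bint. coeff (Cp b) d * (if b = b1 then 1 else 0))"
      by (simp add: fps_sum_nth inner cong: sum.cong)
    also have "\<dots> = (\<Sum>b\<in>Bint. if b = b1 then coeff (Cp b) d else 0)" by (intro sum.cong) auto
    also have "\<dots> = coeff (Cp b1) d" using finite_Bint b1(1) by (simp add: sum.delta')
    finally have "fps_nth (\<Sum>b\<in>Bint. fps_of_poly (Cp b) * Phi b1 b) d = coeff (Cp b1) d" .
    then show False using key[OF b1(1)] b1(2) by simp
  qed
  show ?thesis
  proof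
    fix b assume b: "b \<in> Bint"
    have "to_fract Q * C b = 0" using Cp b Cp0 by force
    then show "C b = 0" using Q by simp
  qed
qed

lemma inj_xmon: "inj_on xmon S"
proof (rule inj_onI)
  fix u v assume "xmon u = xmon v"
  then have "xmon u u = xmon v u" by simp
  then show "u = v" unfolding xmon_def by (auto split: if_splits)
qed

lemma main:
  "quot_dim_eq (DImg a l m (Mset a m \<inter> Ck))
     {xmon u | u. u \<in> Mset a m \<inter> Ck \<and> rv u \<in> rel_interior (coneA a m)}
     (Rk a m Ck)"
proof -
  define X where "X = {xmon u | u. u \<in> Mset a m \<inter> Ck \<and> rv u \<in> rel_interior (coneA a m)}"
  define B where "B = xmon ` Bint"
  have MkE: "Mset a m \<inter> Ck = Mk" unfolding Mk_def ..
  have X_iff: "xmon u \<in> X \<longleftrightarrow> u \<in> Mk \<and> intr u" for u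
  proof
    assume "xmon u \<in> X"
    then obtain u' where u': "xmon u = xmon u'" "u' \<in> Mk" "rv u' \<in> rel_interior (coneA a m)"
      unfolding X_def MkE by blast
    have "u = u'" by (rule inj_onD[OF inj_xmon[of UNIV] u'(1)]) simp_all
    moreover have "intr u'" unfolding intr_def using relint_iff u'(2,3) Mk_iff Ck_VZ by blast
    ultimately show "u \<in> Mk \<and> intr u" using u' by simp
  next
    assume u: "u \<in> Mk \<and> intr u"
    then have "rv u \<in> rel_interior (coneA a m)" using relint_iff Mk_iff Ck_VZ unfolding intr_def by blast
    then show "xmon u \<in> X" unfolding X_def MkE using u by blast
  qed
  have finB: "finite B" unfolding B_def using finite_Bint by simp
  have cardB: "card B = Rk a m Ck" unfolding B_def Rk_eq by (rule card_image[OF inj_xmon])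
  have subB: "B \<subseteq> kspan X"
  proof
    fix f assume "f \<in> B"
    then obtain b where b: "b \<in> Bint" "f = xmon b" unfolding B_def by blast
    have fX: "f \<in> X" unfolding b(2) X_iff using Bint_Mk[OF b(1)] by blast
    have "f = (\<lambda>v. \<Sum>g\<in>{f}. (\<lambda>_. 1) g * g v)" by simp
    then show "f \<in> kspan X" unfolding kspan_def using fX
      by (intro CollectI exI[of _ "{f}"] exI[of _ "\<lambda>_. 1"] conjI) auto
  qed
  have ind: "\<forall>c. (\<lambda>v. \<Sum>f\<in>B. c f * f v) \<in> DImg a l m (Mset a m \<inter> Ck) \<longrightarrow> (\<forall>f\<in>B. c f = 0)"
  proof (intro allI impI)
    fix c assume "(\<lambda>v. \<Sum>f\<in>B. c f * f v) \<in> DImg a l m (Mset a m \<inter> Ck)"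
    moreover have "(\<lambda>v. \<Sum>f\<in>B. c f * f v) = (\<lambda>v. \<Sum>b\<in>Bint. c (xmon b) * xmon b v)"
      unfolding B_def by (simp add: sum.reindex[OF inj_xmon])
    ultimately have "(\<lambda>v. \<Sum>b\<in>Bint. c (xmon b) * xmon b v) \<in> DI" unfolding MkE by simp
    then have "\<forall>b\<in>Bint. c (xmon b) = 0" by (rule indep_main)
    then show "\<forall>f\<in>B. c f = 0" unfolding B_def by blast
  qed
  have spn: "\<forall>x\<in>X. \<exists>c. (\<lambda>v. x v - (\<Sum>f\<in>B. c f * f v)) \<in> DImg a l m (Mset a m \<inter> Ck)"
  proof
    fix x assume "x \<in> X"
    then obtain u where u: "x = xmon u" "u \<in> Mset a m \<inter> Ck" "rv u \<in> rel_interior (coneA a m)"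
      unfolding X_def by blast
    have "u \<in> Mk \<and> intr u" using X_iff \<open>x \<in> X\<close> u(1) by blast
    then have "xmon u \<in> Gset" using span_all by blast
    then obtain cc d where d: "d \<in> DI" "xmon u = (\<lambda>v. (\<Sum>b\<in>Bint. cc b * xmon b v) + d v)"
      unfolding Gset_def by blast
    define c where "c f = cc (inv_into Bint xmon f)" for f
    have "(\<Sum>f\<in>B. c f * f v) = (\<Sum>b\<in>Bint. cc b * xmon b v)" for v
      unfolding B_def c_def by (simp add: sum.reindex[OF inj_xmon] inv_into_f_f[OF inj_xmon])
    then have "(\<lambda>v. x v - (\<Sum>f\<in>B. c f * f v)) = d" unfolding u(1) d(2) by simp
    then show "\<exists>c. (\<lambda>v. x v - (\<Sum>f\<in>B. c f * f v)) \<in> DImg a l m (Mset a m \<inter> Ck)"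
      using d(1) unfolding MkE by (intro exI[of _ c]) simp
  qed
  show ?thesis unfolding quot_dim_eq_def X_def[symmetric]
    using finB cardB subB ind spn by (intro exI[of _ B]) simp
qed

end

theorem proposition9p1:
  fixes a :: "nat \<Rightarrow> int ^ 'n" and l :: "nat \<Rightarrow> nat" and m :: nat
    and w :: "int ^ 'n" and Ck :: "(int ^ 'n) set"
  assumes inj: "inj_on a {1..m}"
    and indep: "independent (rv ` a ` {1..m})"
    and lpos: "\<forall>j\<in>{0..m}. 0 < l j"
    and lgcd: "Gcd (l ` {0..m}) = 1"
    and rel: "(\<chi> i. int (l 0) * a 0 $ i) = (\<chi> i. \<Sum>j=1..m. int (l j) * a j $ i)"
    and l0: "l 0 = (\<Sum>j=1..m. l j)"
    and coset: "w \<in> VZ a m" "Ck = (\<lambda>g. w + g) ` ZAplus a m"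
  shows "quot_dim_eq (DImg a l m (Mset a m \<inter> Ck))
           {xmon u | u. u \<in> Mset a m \<inter> Ck \<and> rv u \<in> rel_interior (coneA a m)}
           (Rk a m Ck)"
proof -
  obtain \<phi> :: "nat \<Rightarrow> real ^ 'n" where dual: "\<forall>j\<in>{1..m}. \<forall>k\<in>{1..m}. \<phi> j \<bullet> rv (a k) = (if j = k then 1 else 0)"
    using exists_dual[OF inj indep] by blast
  interpret P: P91 a l m w Ck \<phi>
    using inj indep lpos rel l0 coset dual by unfold_locales auto
  show ?thesis by (rule P.main)
qed


end
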